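(* Let $\Omega\subset\mathbb R^d$ be open, bounded, and uniformly locally quasiconvex. Then there exists a bounded linear operator $E: C^1(\bar\Omega)\to C^1_b(\mathbb R^d)$ such that $(Ef)|_{\bar\Omega}=f$ for all $f\in C^1(\bar\Omega)$ (in particular, $\nabla(Ef)=\nabla f$ on $\bar\Omega$).
   Context: $C^1_b(\mathbb R^d)$ is the space of $f\in C^1(\mathbb R^d)$ with $f$ and $\nabla f$ bounded, normed by $\sup\{|\partial^\alpha f(x)|: |\alpha|\le 1, x\in\mathbb R^d\}$. For bounded open $\Omega$, $C^1(\bar\Omega)$ is the space of $f\in C^1(\Omega)$ such that $f$ and all first partial derivatives are uniformly continuous on $\Omega$, normed by $\sup\{|\partial^\alpha f(x)|:|\alpha|\le1,x\in\Omega\}$; $f$ and $\nabla f$ are identified with their continuous extensions to $\bar\Omega$. A set $\Omega\subset\mathbb R^d$ is uniformly locally quasiconvex if there are constants $r>0$, $L\ge1$ such that for all $x,y\in\Omega$ with $|x-y|\le r$ there is a Lipschitz curve $\gamma:[0,1]\to\Omega$ with $\gamma(0)=x$, $\gamma(1)=y$ and Lipschitz constant at most $L|y-x|$. *)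

theory Defs
  imports "HOL-Analysis.Analysis"
begin

text \<open>Points of R^d are elements of a euclidean_space 'a (d = DIM('a)).
  The i-th first partial derivative of f at x is the Frechet derivative of f at x
  applied to the basis vector i.\<close>

definition partial_deriv :: "('a::euclidean_space \<Rightarrow> real) \<Rightarrow> 'a \<Rightarrow> 'a \<Rightarrow> real" where
  "partial_deriv f i x = frechet_derivative f (at x) i"

definition unif_loc_quasiconvex :: "'a::euclidean_space set \<Rightarrow> bool" where
  "unif_loc_quasiconvex \<Omega> \<longleftrightarrow>
     (\<exists>r>0. \<exists>L\<ge>1. \<forall>x\<in>\<Omega>. \<forall>y\<in>\<Omega>. dist x y \<le> r \<longrightarrow>
        (\<exists>\<gamma>::real \<Rightarrow> 'a. \<gamma> 0 = x \<and> \<gamma> 1 = y \<and> \<gamma> ` {0..1} \<subseteq> \<Omega> \<and>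
              (L * dist x y)-lipschitz_on {0..1} \<gamma>))"

text \<open>C^1(closure Omega): f is C^1 on Omega, f and all first partials uniformly continuous
  on Omega. (Values of f outside Omega are irrelevant.)\<close>
definition C1_closure :: "'a::euclidean_space set \<Rightarrow> ('a \<Rightarrow> real) \<Rightarrow> bool" where
  "C1_closure \<Omega> f \<longleftrightarrow>
     (\<forall>x\<in>\<Omega>. f differentiable (at x)) \<and>
     uniformly_continuous_on \<Omega> f \<and>
     (\<forall>i\<in>Basis. uniformly_continuous_on \<Omega> (partial_deriv f i))"

text \<open>sup { |d^alpha f(x)| : |alpha| \<le> 1, x \<in> S } (with 0 added so that the
  empty case gives 0; all members are nonnegative anyway).\<close>
definition C1_norm :: "'a::euclidean_space set \<Rightarrow> ('a \<Rightarrow> real) \<Rightarrow> real" where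
  "C1_norm S f = Sup ({0} \<union> {\<bar>f x\<bar> | x. x \<in> S} \<union>
                      {\<bar>partial_deriv f i x\<bar> | x i. x \<in> S \<and> i \<in> Basis})"

definition C1_bounded :: "('a::euclidean_space \<Rightarrow> real) \<Rightarrow> bool" where
  "C1_bounded f \<longleftrightarrow>
     (\<forall>x. f differentiable (at x)) \<and>
     (\<forall>i\<in>Basis. continuous_on UNIV (partial_deriv f i)) \<and>
     bounded (range f) \<and>
     (\<forall>i\<in>Basis. bounded (range (partial_deriv f i)))"

end

theory Submission
  imports Defs
begin

definition grad :: "('a::euclidean_space \<Rightarrow> real) \<Rightarrow> 'a \<Rightarrow> 'a" where
  "grad f x = (\<Sum>i\<in>Basis. partial_deriv f i x *\<^sub>R i)"

lemma grad_deriv: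
  assumes "f differentiable (at x)"
  shows "(f has_derivative (\<lambda>w. grad f x \<bullet> w)) (at x)"
proof -
  let ?D = "frechet_derivative f (at x)"
  have d: "(f has_derivative ?D) (at x)" using assms frechet_derivative_works by blast
  then have lin: "linear ?D" using has_derivative_linear by blast
  have "?D w = grad f x \<bullet> w" for w
  proof -
    have "?D w = ?D (\<Sum>i\<in>Basis. (w \<bullet> i) *\<^sub>R i)" by (simp add: euclidean_representation)
    also have "\<dots> = (\<Sum>i\<in>Basis. (w \<bullet> i) * ?D i)"
      using lin by (simp add: linear_sum linear_cmul)
    also have "\<dots> = grad f x \<bullet> w"
      by (simp add: grad_def partial_deriv_def inner_sum_right inner_commute mult.commute)
    finally show ?thesis .
  qed
  then have "?D = (\<lambda>w. grad f x \<bullet> w)" by auto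
  then show ?thesis using d by simp
qed

lemma partial_deriv_eq:
  assumes "(f has_derivative (\<lambda>w. g \<bullet> w)) (at x)"
  shows "partial_deriv f i x = g \<bullet> i"
  using frechet_derivative_at[OF assms] by (simp add: partial_deriv_def)

lemma mq_deriv: "((\<lambda>t::real. (max 0 t)^2) has_real_derivative 2 * max 0 t) (at t)"
proof (cases "t = 0")
  case True
  have "((\<lambda>y. ((max 0 y)^2 - (max 0 0)^2) / (y - 0)) \<longlongrightarrow> 0) (at (0::real))"
  proof (rule Lim_null_comparison[where g="\<lambda>y. norm y"])
    show "\<forall>\<^sub>F y in at 0. norm (((max 0 y)^2 - (max 0 0)^2) / (y - 0)) \<le> norm (y::real)"
      by (rule always_eventually) (auto simp: power2_eq_square abs_mult max_def divide_simps)
    show "((\<lambda>y. norm y) \<longlongrightarrow> 0) (at (0::real))"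
      by (rule tendsto_norm_zero) (rule tendsto_ident_at)
  qed
  then show ?thesis using True by (simp add: has_field_derivative_iff)
next
  case False
  show ?thesis
  proof (cases "t > 0")
    case True
    have "((\<lambda>t::real. t^2) has_real_derivative 2 * t) (at t)"
      by (auto intro!: derivative_eq_intros)
    then have "((\<lambda>t::real. t^2) has_real_derivative 2 * max 0 t) (at t)" using True by simp
    then show ?thesis
    proof (rule has_field_derivative_transform_within_open[where S="{0<..}"])
      show "y^2 = (max 0 y)^2" if "y \<in> {0<..}" for y::real using that by auto
    qed (use True in auto)
  next
    case f2: False
    with False have t: "t < 0" by auto
    have "((\<lambda>t::real. 0) has_real_derivative 0) (at t)"
      by (auto intro!: derivative_eq_intros)
    then have "((\<lambda>t::real. 0) has_real_derivative 2 * max 0 t) (at t)" using t by simp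
    then show ?thesis
    proof (rule has_field_derivative_transform_within_open[where S="{..<0}"])
      show "0 = (max 0 y)^2" if "y \<in> {..<0}" for y::real using that by auto
    qed (use t in auto)
  qed
qed

definition bump :: "real \<Rightarrow> 'a::euclidean_space \<Rightarrow> 'a \<Rightarrow> real" where
  "bump r v x = (max 0 (1 - (norm (x - v))^2 / r^2))^2"

definition bgrad :: "real \<Rightarrow> 'a::euclidean_space \<Rightarrow> 'a \<Rightarrow> 'a" where
  "bgrad r v x = (- 4 * max 0 (1 - (norm (x - v))^2 / r^2) / r^2) *\<^sub>R (x - v)"

lemma bump_deriv: assumes r: "r > 0" shows "(bump r v has_derivative (\<lambda>w. bgrad r v x \<bullet> w)) (at x)"
proof -
  have q0: "((\<lambda>x. 1 - ((x - v) \<bullet> (x - v)) / r^2) has_derivative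
            (\<lambda>w. 0 - ((w \<bullet> (x - v) + (x - v) \<bullet> w) * r^2 - ((x - v) \<bullet> (x - v)) * 0) / (r^2 * r^2))) (at x)"
    using r by (intro derivative_eq_intros) auto
  have "(\<lambda>w. 0 - ((w \<bullet> (x - v) + (x - v) \<bullet> w) * r^2 - ((x - v) \<bullet> (x - v)) * 0) / (r^2 * r^2))
     = (\<lambda>w. - (2 * ((x - v) \<bullet> w)) / r^2)"
    using r by (auto simp: inner_commute field_simps power2_eq_square)
  with q0 have q: "((\<lambda>x. 1 - ((x - v) \<bullet> (x - v)) / r^2) has_derivative
            (\<lambda>w. - (2 * ((x - v) \<bullet> w)) / r^2)) (at x)" by simp
  have "((\<lambda>x. (max 0 (1 - ((x - v) \<bullet> (x - v)) / r^2))^2) has_derivative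
     (\<lambda>w. - (2 * ((x - v) \<bullet> w)) / r^2 * (2 * max 0 (1 - ((x - v) \<bullet> (x - v)) / r^2)))) (at x)"
    by (rule DERIV_compose_FDERIV[OF mq_deriv q])
  moreover have "(\<lambda>w. - (2 * ((x - v) \<bullet> w)) / r^2 * (2 * max 0 (1 - ((x - v) \<bullet> (x - v)) / r^2)))
      = (\<lambda>w. bgrad r v x \<bullet> w)"
    unfolding bgrad_def power2_norm_eq_inner inner_scaleR_left by (rule ext) (simp add: divide_simps mult_ac)
  moreover have "(\<lambda>x. (max 0 (1 - ((x - v) \<bullet> (x - v)) / r^2))^2) = bump r v"
    by (auto simp: bump_def power2_norm_eq_inner)
  ultimately show ?thesis by simp
qed

lemma bump_nonneg: "0 \<le> bump r v x" by (simp add: bump_def)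

lemma bump_le1: assumes "r > 0" shows "bump r v x \<le> 1"
proof -
  have "max 0 (1 - (norm (x - v))^2 / r^2) \<le> 1" using assms by auto
  then show ?thesis unfolding bump_def by (simp add: power_le_one)
qed

lemma bump_nz: assumes "r > 0" "bump r v x \<noteq> 0" shows "norm (x - v) < r"
proof (rule ccontr)
  assume "\<not> norm (x - v) < r"
  then have "r^2 \<le> (norm (x - v))^2" using assms(1) by (simp add: power_mono)
  then have "1 - (norm (x - v))^2 / r^2 \<le> 0" using assms(1) by (simp add: field_simps)
  then have "max 0 (1 - (norm (x - v))^2 / r^2) = 0" by linarith
  then show False using assms(2) unfolding bump_def by simp
qed

lemma bump_big: assumes "r > 0" "norm (x - v) \<le> r / 2" shows "bump r v x \<ge> 9/16"
proof -
  have "(norm (x - v))^2 \<le> (r/2)^2" using assms by (simp add: power_mono)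
  then have "(norm (x - v))^2 / r^2 \<le> 1/4" using assms(1) by (simp add: field_simps power2_eq_square)
  then have "1 - (norm (x - v))^2 / r^2 \<ge> 3/4" by linarith
  then have "max 0 (1 - (norm (x - v))^2 / r^2) \<ge> 3/4" by linarith
  then have "(3/4::real)^2 \<le> (max 0 (1 - (norm (x - v))^2 / r^2))^2"
    by (rule power_mono) auto
  then show ?thesis by (simp add: bump_def power2_eq_square)
qed

lemma bgrad_zero: assumes "r > 0" "bump r v x = 0" shows "bgrad r v x = 0"
  using assms by (simp add: bump_def bgrad_def)

lemma bgrad_bound: assumes "r > 0" shows "norm (bgrad r v x) \<le> 4 / r"
proof (cases "norm (x - v) < r")
  case True
  let ?m = "max 0 (1 - (norm (x - v))^2 / r^2)"
  have m: "0 \<le> ?m" "?m \<le> 1" using assms by auto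
  have "norm (bgrad r v x) = 4 * ?m / r^2 * norm (x - v)"
    using m assms by (simp add: bgrad_def abs_mult)
  also have "\<dots> \<le> 4 * 1 / r^2 * r"
    using m assms True by (intro mult_mono divide_right_mono) auto
  also have "\<dots> = 4 / r" using assms by (simp add: power2_eq_square)
  finally show ?thesis .
next
  case False
  then have z: "bump r v x = 0" using bump_nz[OF assms] by blast
  show ?thesis using bgrad_zero[OF assms z] assms by simp
qed

lemma bgrad_cont: "r > 0 \<Longrightarrow> continuous_on S (bgrad r v)"
  unfolding bgrad_def by (intro continuous_intros) auto

lemma bump_cont: "r > 0 \<Longrightarrow> continuous_on S (bump r v)"
  unfolding bump_def by (intro continuous_intros) auto


definition hs :: "int \<Rightarrow> real" where "hs j = 2 powr (of_int j)"

lemma hs_pos[simp]: "hs j > 0" by (simp add: hs_def)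

lemma hs_le_iff: "hs j \<le> hs k \<longleftrightarrow> j \<le> k" by (simp add: hs_def)
lemma hs_less_iff: "hs j < hs k \<longleftrightarrow> j < k" by (simp add: hs_def)

lemma hs_le_1: "hs j \<le> 1 \<longleftrightarrow> j \<le> 0"
  using hs_le_iff[of j 0] by (simp add: hs_def)

lemma hs_add: "hs (j + k) = hs j * hs k" by (simp add: hs_def powr_add)

lemma log_hs: "log 2 (hs j) = of_int j" by (simp add: hs_def)

lemma hs_ge_iff_log: assumes "a > 0" shows "a \<le> hs j \<longleftrightarrow> log 2 a \<le> of_int j"
proof -
  have "a \<le> hs j \<longleftrightarrow> log 2 a \<le> log 2 (hs j)" using assms by simp
  then show ?thesis by (simp add: log_hs)
qed

lemma hs_le_iff_log: assumes "b > 0" shows "hs j \<le> b \<longleftrightarrow> of_int j \<le> log 2 b"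
proof -
  have "hs j \<le> b \<longleftrightarrow> log 2 (hs j) \<le> log 2 b" using assms by simp
  then show ?thesis by (simp add: log_hs)
qed

lemma scales_finite: assumes "a > 0" shows "finite {j. a \<le> hs j \<and> hs j \<le> b}"
proof (cases "b > 0")
  case True
  have "{j. a \<le> hs j \<and> hs j \<le> b} \<subseteq> {\<lceil>log 2 a\<rceil> .. \<lfloor>log 2 b\<rfloor>}"
    using hs_ge_iff_log[OF assms] hs_le_iff_log[OF True] by (auto simp: ceiling_le_iff le_floor_iff)
  then show ?thesis using finite_subset by blast
next
  case False
  have "{j. a \<le> hs j \<and> hs j \<le> b} = {}"
  proof (rule ccontr)
    assume "{j. a \<le> hs j \<and> hs j \<le> b} \<noteq> {}"
    then obtain j where "a \<le> hs j" "hs j \<le> b" by auto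
    then show False using assms False by linarith
  qed
  then show ?thesis by (metis finite.emptyI)
qed

lemma scales_card: assumes "a > 0" shows "card {j. a \<le> hs j \<and> hs j < 8 * a} \<le> 3"
proof -
  let ?j0 = "\<lceil>log 2 a\<rceil>"
  have "{j. a \<le> hs j \<and> hs j < 8 * a} \<subseteq> {?j0 .. ?j0 + 2}"
  proof
    fix j assume j: "j \<in> {j. a \<le> hs j \<and> hs j < 8 * a}"
    then have "log 2 a \<le> of_int j" using hs_ge_iff_log[OF assms] by auto
    then have "?j0 \<le> j" by (simp add: ceiling_le_iff)
    moreover have "hs j < hs (?j0 + 3)"
    proof -
      have "a \<le> hs ?j0" using hs_ge_iff_log[OF assms] by simp
      then have "8 * a \<le> hs ?j0 * 8" by simp
      also have "hs ?j0 * 8 = hs (?j0 + 3)" by (simp add: hs_def powr_add powr_numeral)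
      finally show ?thesis using j by auto
    qed
    then have "j < ?j0 + 3" by (simp add: hs_less_iff)
    ultimately show "j \<in> {?j0 .. ?j0 + 2}" by auto
  qed
  then have "card {j. a \<le> hs j \<and> hs j < 8 * a} \<le> card {?j0 .. ?j0 + 2}"
    by (intro card_mono) auto
  then show ?thesis by simp
qed

lemma exists_scale: assumes "t > 0" shows "\<exists>j. hs j \<le> t \<and> t < 2 * hs j"
proof -
  let ?j = "\<lfloor>log 2 t\<rfloor>"
  have "hs ?j \<le> t" using hs_le_iff_log[OF assms] by simp
  moreover have "t < hs (?j + 1)"
  proof (rule ccontr)
    assume "\<not> t < hs (?j + 1)"
    then have "hs (?j + 1) \<le> t" by simp
    then have "of_int (?j + 1) \<le> log 2 t" using hs_le_iff_log[OF assms] by blast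
    then show False by linarith
  qed
  then have "t < 2 * hs ?j" by (simp add: hs_def powr_add mult.commute)
  ultimately show ?thesis by blast
qed

definition lat :: "real \<Rightarrow> 'a::euclidean_space set" where
  "lat h = {v. \<forall>i\<in>Basis. v \<bullet> i / h \<in> \<int>}"

lemma lat_near:
  assumes h: "h > 0"
  shows "\<exists>v\<in>(lat h :: 'a::euclidean_space set). norm (x - v) \<le> real DIM('a) * h"
proof -
  define v :: 'a where "v = (\<Sum>i\<in>Basis. (h * of_int \<lfloor>x \<bullet> i / h\<rfloor>) *\<^sub>R i)"
  have vi: "v \<bullet> i = h * of_int \<lfloor>x \<bullet> i / h\<rfloor>" if "i \<in> Basis" for i
    using that by (simp add: v_def inner_sum_left inner_Basis if_distrib cong: if_cong)
  have "v \<in> lat h" using h by (auto simp: lat_def vi)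
  moreover have "norm (x - v) \<le> real DIM('a) * h"
  proof -
    have b: "\<bar>(x - v) \<bullet> i\<bar> \<le> h" if "i \<in> Basis" for i
    proof -
      have f1: "of_int \<lfloor>x \<bullet> i / h\<rfloor> \<le> x \<bullet> i / h" and f2: "x \<bullet> i / h < of_int \<lfloor>x \<bullet> i / h\<rfloor> + 1"
        by linarith+
      have "h * of_int \<lfloor>x \<bullet> i / h\<rfloor> \<le> h * (x \<bullet> i / h)" using mult_left_mono[OF f1, of h] h by simp
      moreover have "h * (x \<bullet> i / h) < h * (of_int \<lfloor>x \<bullet> i / h\<rfloor> + 1)" using mult_strict_left_mono[OF f2 h] by simp
      ultimately have "h * of_int \<lfloor>x \<bullet> i / h\<rfloor> \<le> x \<bullet> i" "x \<bullet> i < h * of_int \<lfloor>x \<bullet> i / h\<rfloor> + h"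
        using h by (auto simp: algebra_simps)
      then show ?thesis using that by (simp add: inner_diff_left vi)
    qed
    have "norm (x - v) \<le> (\<Sum>i\<in>Basis. \<bar>(x - v) \<bullet> i\<bar>)" by (rule norm_le_l1)
    also have "\<dots> \<le> (\<Sum>i\<in>(Basis::'a set). h)" by (rule sum_mono) (use b in auto)
    also have "\<dots> = real DIM('a) * h" by simp
    finally show ?thesis .
  qed
  ultimately show ?thesis by blast
qed

lemma lat_count:
  assumes h: "h > 0"
  shows "finite (lat h \<inter> ball y (real n * h) :: 'a::euclidean_space set) \<and>
         card (lat h \<inter> ball y (real n * h) :: 'a set) \<le> (2 * n + 1) ^ DIM('a)"
proof -
  let ?L = "lat h \<inter> ball y (real n * h) :: 'a set"
  define \<phi> where "\<phi> v = (\<lambda>i\<in>(Basis::'a set). \<lfloor>v \<bullet> i / h\<rfloor> - \<lfloor>y \<bullet> i / h\<rfloor>)" for v :: 'a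
  let ?P = "PiE (Basis::'a set) (\<lambda>_. {- int n .. int n})"
  have fin: "finite ?P" by (intro finite_PiE) auto
  have inj: "inj_on \<phi> ?L"
  proof (rule inj_onI)
    fix u w assume u: "u \<in> ?L" and w: "w \<in> ?L" and e: "\<phi> u = \<phi> w"
    show "u = w"
    proof (rule euclidean_eqI)
      fix i :: 'a assume i: "i \<in> Basis"
      have "\<lfloor>u \<bullet> i / h\<rfloor> = \<lfloor>w \<bullet> i / h\<rfloor>" using fun_cong[OF e, of i] i by (simp add: \<phi>_def)
      moreover have "u \<bullet> i / h \<in> \<int>" "w \<bullet> i / h \<in> \<int>" using u w i by (auto simp: lat_def)
      ultimately have "u \<bullet> i / h = w \<bullet> i / h" by (metis floor_of_int Ints_cases)
      then show "u \<bullet> i = w \<bullet> i" using h by simp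
    qed
  qed
  have sub: "\<phi> ` ?L \<subseteq> ?P"
  proof
    fix z assume "z \<in> \<phi> ` ?L"
    then obtain v where v: "v \<in> ?L" and z: "z = \<phi> v" by auto
    have "\<phi> v i \<in> {- int n .. int n}" if i: "i \<in> Basis" for i
    proof -
      obtain m where m: "v \<bullet> i / h = of_int m" using v i by (auto simp: lat_def elim!: Ints_cases)
      have "\<bar>v \<bullet> i - y \<bullet> i\<bar> \<le> norm (v - y)"
        using Basis_le_norm[OF i, of "v - y"] by (simp add: inner_diff_left)
      also have "\<dots> < real n * h" using v by (auto simp: dist_norm norm_minus_commute)
      finally have "\<bar>v \<bullet> i / h - y \<bullet> i / h\<bar> < real n"
        using h by (simp add: field_simps abs_divide diff_divide_distrib[symmetric])
      then have "\<bar>of_int m - y \<bullet> i / h\<bar> < real n" using m by simp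
      then have "of_int m - real n < y \<bullet> i / h" "y \<bullet> i / h < of_int m + real n" by linarith+
      then have "m - int n \<le> \<lfloor>y \<bullet> i / h\<rfloor>" "\<lfloor>y \<bullet> i / h\<rfloor> < m + int n"
        by (simp_all add: le_floor_iff floor_less_iff)
      moreover have "\<lfloor>v \<bullet> i / h\<rfloor> = m" using m by simp
      ultimately show ?thesis using i by (simp add: \<phi>_def)
    qed
    then show "z \<in> ?P" using z by (auto simp: \<phi>_def)
  qed
  have "finite ?L" using finite_imageD[OF finite_subset[OF sub fin] inj] .
  moreover have "card ?L \<le> (2 * n + 1) ^ DIM('a)"
  proof -
    have "card ?L = card (\<phi> ` ?L)" using card_image[OF inj] by simp
    also have "\<dots> \<le> card ?P" by (rule card_mono[OF fin sub])
    also have "\<dots> = (2 * n + 1) ^ DIM('a)" by (simp add: card_PiE, simp add: nat_add_distrib nat_mult_distrib)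
    finally show ?thesis .
  qed
  ultimately show ?thesis by blast
qed


lemma infdist_lessE:
  assumes "A \<noteq> {}" "infdist x A < e"
  shows "\<exists>a\<in>A. dist x a < e"
proof -
  have "(INF a\<in>A. dist x a) < e" using assms by (simp add: infdist_notempty)
  moreover have "bdd_below ((\<lambda>a. dist x a) ` A)" by (rule bdd_belowI[where m=0]) auto
  ultimately show ?thesis using cINF_less_iff[OF assms(1)] by blast
qed

locale pu =
  fixes \<Omega> :: "'a::euclidean_space set"
  assumes bdd: "bounded \<Omega>" and ne: "\<Omega> \<noteq> {}"
begin

abbreviation "K \<equiv> closure \<Omega>"
definition "\<delta> x = infdist x K"
definition "I = {(j, v). v \<in> lat (hs j) \<and> 4 * real DIM('a) * hs j \<le> \<delta> v \<and> \<delta> v \<le> 11 * real DIM('a) * hs j}"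
definition "rad j = 2 * real DIM('a) * hs j"
definition "\<psi> k x = bump (rad (fst k)) (snd k) x"
definition "g\<psi> k x = bgrad (rad (fst k)) (snd k) x"
definition "A x = {k \<in> I. \<psi> k x \<noteq> 0}"
definition "S x = (\<Sum>k\<in>A x. \<psi> k x)"
definition "pt k = (SOME p. p \<in> \<Omega> \<and> dist p (snd k) < 2 * \<delta> (snd k))"
definition "NC = 3 * (4 * DIM('a) + 1) ^ DIM('a)"

lemma dd_ge1: "real DIM('a) \<ge> 1" by (simp add: DIM_positive Suc_leI)
lemma dd_pos: "real DIM('a) > 0" using dd_ge1 by simp

lemma K_compact: "compact K" using bdd by (simp add: compact_closure)
lemma K_ne: "K \<noteq> {}" using ne by simp

lemma rad_pos[simp]: "rad j > 0" using dd_pos by (simp add: rad_def)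

lemma \<delta>_nonneg: "\<delta> x \<ge> 0" by (simp add: \<delta>_def infdist_nonneg)
lemma \<delta>_pos: "x \<notin> K \<Longrightarrow> \<delta> x > 0"
  unfolding \<delta>_def by (rule infdist_pos_not_in_closed) (use K_ne in auto)
lemma \<delta>_zero: "x \<in> K \<Longrightarrow> \<delta> x = 0" by (simp add: \<delta>_def)
lemma \<delta>_lip: "\<bar>\<delta> x - \<delta> y\<bar> \<le> dist x y" unfolding \<delta>_def by (rule infdist_triangle_abs)
lemma \<delta>_le: "z \<in> K \<Longrightarrow> \<delta> x \<le> dist x z" unfolding \<delta>_def by (rule infdist_le)
lemma \<delta>_pos_iff: "\<delta> x > 0 \<longleftrightarrow> x \<notin> K" using \<delta>_pos \<delta>_zero by force

lemma \<delta>_attained: "\<exists>z\<in>K. \<delta> x = dist x z"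
  unfolding \<delta>_def using infdist_attains_inf[of K x] K_ne by auto

lemma pt_prop: assumes "k \<in> I" shows "pt k \<in> \<Omega> \<and> dist (pt k) (snd k) < 2 * \<delta> (snd k)"
proof -
  obtain j v where k: "k = (j, v)" by fastforce
  have "\<delta> v \<ge> 4 * real DIM('a) * hs j" using assms k by (auto simp: I_def)
  then have pos: "\<delta> v > 0" using dd_pos hs_pos[of j] by (smt (verit) mult_pos_pos)
  have "infdist v \<Omega> = \<delta> v" by (simp add: \<delta>_def infdist_eq_setdist)
  then have "infdist v \<Omega> < 2 * \<delta> v" using pos by simp
  then obtain a where "a \<in> \<Omega>" "dist v a < 2 * \<delta> v" using infdist_lessE ne by blast
  then have "\<exists>p. p \<in> \<Omega> \<and> dist p (snd k) < 2 * \<delta> (snd k)" using k by (auto simp: dist_commute)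
  then show ?thesis unfolding pt_def by (rule someI_ex)
qed

lemma supp:
  assumes "k \<in> I" "\<psi> k y \<noteq> 0"
  shows "dist y (snd k) < rad (fst k)"
    and "2 * (real DIM('a) * hs (fst k)) < \<delta> y" and "\<delta> y < 13 * (real DIM('a) * hs (fst k))"
    and "dist y (pt k) < 12 * \<delta> y"
proof -
  obtain j v where k: "k = (j, v)" by fastforce
  define a where "a = real DIM('a) * hs j"
  have I: "v \<in> lat (hs j)" "4 * a \<le> \<delta> v" "\<delta> v \<le> 11 * a" using assms k
    by (auto simp: I_def a_def mult.assoc)
  have r: "rad j = 2 * a" by (simp add: rad_def a_def)
  show d: "dist y (snd k) < rad (fst k)"
    using bump_nz[OF rad_pos] assms k by (auto simp: \<psi>_def dist_norm)
  have l: "\<bar>\<delta> y - \<delta> v\<bar> \<le> dist y v" by (rule \<delta>_lip)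
  have dv: "dist y v < 2 * a" using d k r by simp
  have 1: "2 * a < \<delta> y" "\<delta> y < 13 * a" using dv l I by linarith+
  then show "2 * (real DIM('a) * hs (fst k)) < \<delta> y" "\<delta> y < 13 * (real DIM('a) * hs (fst k))"
    using k by (simp_all add: a_def)
  have "dist (pt k) v < 2 * \<delta> v" using pt_prop[OF assms(1)] k by auto
  then have "dist y (pt k) < 2 * a + 2 * \<delta> v" using dv dist_triangle[of y "pt k" v]
    by (simp add: dist_commute)
  then show "dist y (pt k) < 12 * \<delta> y" using I 1 by linarith
qed

lemma A_sub_Sigma:
  assumes "y \<notin> K"
  shows "A y \<subseteq> (SIGMA j:{j. \<delta> y / (13 * real DIM('a)) \<le> hs j \<and> hs j < 8 * (\<delta> y / (13 * real DIM('a)))}.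
                  lat (hs j) \<inter> ball y (real (2 * DIM('a)) * hs j))"
proof
  fix k assume kA: "k \<in> A y"
  obtain j v where k: "k = (j, v)" by fastforce
  have kI: "k \<in> I" and nz: "\<psi> k y \<noteq> 0" using kA by (auto simp: A_def)
  note s = supp[OF kI nz]
  define a where "a = real DIM('a) * hs j"
  have s2: "2 * a < \<delta> y" and s3: "\<delta> y < 13 * a" using s(2,3) k by (simp_all add: a_def)
  have p13: "13 * real DIM('a) > 0" using dd_pos by simp
  have e13: "hs j * (13 * real DIM('a)) = 13 * a" by (simp add: a_def)
  have m1: "\<delta> y / (13 * real DIM('a)) \<le> hs j"
    unfolding pos_divide_le_eq[OF p13] e13 using s3 by linarith
  moreover have m2: "hs j < 8 * (\<delta> y / (13 * real DIM('a)))"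
  proof -
    have apos: "a > 0" using dd_pos by (simp add: a_def)
    have "13 * a < 8 * \<delta> y" using s2 apos by linarith
    then have "hs j * (13 * real DIM('a)) < 8 * \<delta> y" using e13 by simp
    then have "hs j < 8 * \<delta> y / (13 * real DIM('a))" using p13 by (simp add: pos_less_divide_eq)
    then show ?thesis by simp
  qed
  moreover have m3: "v \<in> lat (hs j)" using kI k by (auto simp: I_def)
  moreover have m4: "v \<in> ball y (real (2 * DIM('a)) * hs j)" using s(1) k by (simp add: rad_def)
  show "k \<in> (SIGMA j:{j. \<delta> y / (13 * real DIM('a)) \<le> hs j \<and> hs j < 8 * (\<delta> y / (13 * real DIM('a)))}.
                  lat (hs j) \<inter> ball y (real (2 * DIM('a)) * hs j))" unfolding k
    using m1 m2 m3 m4 by blast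
qed

lemma A_finite_card:
  assumes "y \<notin> K"
  shows "finite (A y) \<and> card (A y) \<le> NC"
proof -
  let ?J = "{j. \<delta> y / (13 * real DIM('a)) \<le> hs j \<and> hs j < 8 * (\<delta> y / (13 * real DIM('a)))}"
  let ?B = "\<lambda>j. lat (hs j) \<inter> ball y (real (2 * DIM('a)) * hs j) :: 'a set"
  have a: "\<delta> y / (13 * real DIM('a)) > 0" using \<delta>_pos[OF assms] dd_pos by simp
  have fJ: "finite ?J"
    by (rule finite_subset[OF _ scales_finite[OF a, of "8 * (\<delta> y / (13 * real DIM('a)))"]]) (simp add: subset_eq)
  have cJ: "card ?J \<le> 3" by (rule scales_card[OF a])
  have fB: "finite (?B j)" and cB: "card (?B j) \<le> (2 * (2 * DIM('a)) + 1) ^ DIM('a)" for j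
    using lat_count[OF hs_pos[of j], of y "2 * DIM('a)"] by blast+
  have fS: "finite (Sigma ?J ?B)" using fJ fB by (intro finite_SigmaI) 
  have "card (Sigma ?J ?B) = (\<Sum>j\<in>?J. card (?B j))" using fJ fB by (intro card_SigmaI) auto
  also have "\<dots> \<le> card ?J * (4 * DIM('a) + 1) ^ DIM('a)"
  proof -
    have "\<And>j. card (?B j) \<le> (4 * DIM('a) + 1) ^ DIM('a)" using cB by (simp add: mult.assoc)
    then show ?thesis using sum_bounded_above[of ?J "\<lambda>j. card (?B j)" "(4 * DIM('a) + 1) ^ DIM('a)"]
      by (metis of_nat_id)
  qed
  also have "\<dots> \<le> NC" using cJ by (simp add: NC_def)
  finally have "card (Sigma ?J ?B) \<le> NC" .
  moreover have "finite (A y)" using A_sub_Sigma[OF assms] fS by (rule finite_subset)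
  moreover have "card (A y) \<le> card (Sigma ?J ?B)" using A_sub_Sigma[OF assms] fS by (rule card_mono[rotated])
  ultimately show ?thesis by linarith
qed

lemma A_finite: "y \<notin> K \<Longrightarrow> finite (A y)" using A_finite_card by blast

lemma \<psi>_nonneg: "\<psi> k x \<ge> 0" by (simp add: \<psi>_def bump_nonneg)

lemma S_ge: assumes "y \<notin> K" shows "S y \<ge> 9/16"
proof -
  have t: "\<delta> y / (5 * real DIM('a)) > 0" using \<delta>_pos[OF assms] dd_pos by simp
  obtain j where j: "hs j \<le> \<delta> y / (5 * real DIM('a))" "\<delta> y / (5 * real DIM('a)) < 2 * hs j" using exists_scale[OF t] by blast
  obtain v where v: "v \<in> lat (hs j)" "norm (y - v) \<le> real DIM('a) * hs j" using lat_near[OF hs_pos[of j], of y] by blast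
  have l: "\<bar>\<delta> y - \<delta> v\<bar> \<le> dist y v" by (rule \<delta>_lip)
  define a where "a = real DIM('a) * hs j"
  have j': "5 * a \<le> \<delta> y" "\<delta> y < 10 * a" using j dd_pos
    by (simp_all add: a_def le_divide_eq divide_less_eq mult_ac)
  have dv: "dist y v \<le> a" using v by (simp add: dist_norm a_def)
  have "4 * a \<le> \<delta> v" "\<delta> v \<le> 11 * a" using j' dv l by linarith+
  then have "(j, v) \<in> I" using v by (simp add: I_def a_def mult.assoc)
  moreover have "\<psi> (j, v) y \<ge> 9/16" unfolding \<psi>_def using v
    by (intro bump_big) (auto simp: rad_def)
  ultimately have kA: "(j, v) \<in> A y" by (auto simp: A_def)
  have "\<psi> (j, v) y \<le> S y" unfolding S_def
    by (rule member_le_sum[OF kA]) (auto simp: \<psi>_nonneg A_finite[OF assms])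
  then show ?thesis using \<open>\<psi> (j, v) y \<ge> 9/16\<close> by simp
qed

lemma S_pos: assumes "y \<notin> K" shows "S y > 0" using S_ge[OF assms] by linarith

lemma A_ne: assumes "y \<notin> K" shows "A y \<noteq> {}"
proof
  assume "A y = {}"
  then have "S y = 0" by (simp add: S_def)
  then show False using S_pos[OF assms] by simp
qed

lemma gsum_bound:
  assumes "y \<notin> K"
  shows "(\<Sum>k\<in>A y. norm (g\<psi> k y)) \<le> NC * 26 / \<delta> y"
proof -
  have "norm (g\<psi> k y) \<le> 26 / \<delta> y" if "k \<in> A y" for k
  proof -
    have kI: "k \<in> I" and nz: "\<psi> k y \<noteq> 0" using that by (auto simp: A_def)
    have "norm (g\<psi> k y) \<le> 4 / rad (fst k)" unfolding g\<psi>_def by (rule bgrad_bound) simp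
    also have "\<dots> \<le> 26 / \<delta> y"
    proof -
      define a where "a = real DIM('a) * hs (fst k)"
      have a: "a > 0" using dd_pos by (simp add: a_def)
      have s3: "\<delta> y < 13 * a" using supp(3)[OF kI nz] by (simp add: a_def)
      have "4 / rad (fst k) = 2 / a" by (simp add: rad_def a_def)
      moreover have "2 / a \<le> 26 / \<delta> y" using a s3 \<delta>_pos[OF assms]
        by (simp add: divide_simps)
      ultimately show ?thesis by simp
    qed
    finally show ?thesis .
  qed
  then have "(\<Sum>k\<in>A y. norm (g\<psi> k y)) \<le> of_nat (card (A y)) * (26 / \<delta> y)"
    by (rule sum_bounded_above)
  also have "\<dots> \<le> NC * (26 / \<delta> y)"
    using A_finite_card[OF assms] \<delta>_pos[OF assms] by (intro mult_right_mono) auto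
  finally show ?thesis by simp
qed

end

context pu begin

definition "F0 x = (SIGMA j:{j. \<delta> x / (26 * real DIM('a)) \<le> hs j \<and> hs j \<le> \<delta> x / real DIM('a)}.
                  lat (hs j) \<inter> ball x (real (15 * DIM('a)) * hs j)) \<inter> I"

lemma F0_finite: assumes "x \<notin> K" shows "finite (F0 x)"
proof -
  have a: "\<delta> x / (26 * real DIM('a)) > 0" using \<delta>_pos[OF assms] dd_pos by simp
  have "finite (SIGMA j:{j. \<delta> x / (26 * real DIM('a)) \<le> hs j \<and> hs j \<le> \<delta> x / real DIM('a)}.
                  (lat (hs j) \<inter> ball x (real (15 * DIM('a)) * hs j) :: 'a set))"
    using scales_finite[OF a] lat_count[OF hs_pos] by (intro finite_SigmaI) blast+
  then show ?thesis unfolding F0_def by (rule finite_subset[rotated]) blast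
qed

lemma ball_notK: assumes "x \<notin> K" "y \<in> ball x (\<delta> x / 2)"
  shows "y \<notin> K" and "\<delta> x / 2 < \<delta> y" and "\<delta> y < 3 * \<delta> x / 2"
proof -
  have "\<bar>\<delta> y - \<delta> x\<bar> \<le> dist y x" by (rule \<delta>_lip)
  moreover have "dist y x < \<delta> x / 2" using assms(2) by (simp add: dist_commute)
  ultimately show *: "\<delta> x / 2 < \<delta> y" "\<delta> y < 3 * \<delta> x / 2" by linarith+
  then show "y \<notin> K" using \<delta>_pos[OF assms(1)] \<delta>_zero by force
qed

lemma F0_cover: assumes "x \<notin> K" "y \<in> ball x (\<delta> x / 2)" shows "A y \<subseteq> F0 x"
proof
  fix k assume kA: "k \<in> A y"
  obtain j v where k: "k = (j, v)" by fastforce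
  have kI: "k \<in> I" and nz: "\<psi> k y \<noteq> 0" using kA by (auto simp: A_def)
  note s = supp[OF kI nz]
  note b = ball_notK[OF assms]
  define a where "a = real DIM('a) * hs j"
  have apos: "a > 0" using dd_pos by (simp add: a_def)
  have s2: "2 * a < \<delta> y" and s3: "\<delta> y < 13 * a" using s(2,3) k by (simp_all add: a_def)
  have dyv: "dist y v < 2 * a" using s(1) k by (simp add: rad_def a_def)
  have dxy: "dist x y < \<delta> x / 2" using assms(2) by simp
  have p26: "26 * real DIM('a) > 0" using dd_pos by simp
  have m1: "\<delta> x / (26 * real DIM('a)) \<le> hs j"
  proof -
    have e: "hs j * (26 * real DIM('a)) = 26 * a" by (simp add: a_def)
    have "\<delta> x \<le> hs j * (26 * real DIM('a))" unfolding e using b(2) s3 by linarith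
    then show ?thesis using p26 by (simp add: pos_divide_le_eq)
  qed
  have m2: "hs j \<le> \<delta> x / real DIM('a)"
  proof -
    have "hs j * real DIM('a) \<le> \<delta> x" using b s2 apos by (simp add: a_def mult.commute)
    then show ?thesis using dd_pos by (simp add: pos_le_divide_eq)
  qed
  have "dist x v \<le> dist x y + dist y v" by (rule dist_triangle)
  then have "dist x v < real (15 * DIM('a)) * hs j" using dyv dxy b s3 by (simp add: a_def)
  then show "k \<in> F0 x" unfolding F0_def k using m1 m2 kI k by (auto simp: I_def)
qed

lemma sum_AF:
  assumes "finite F" "A y \<subseteq> F" "F \<subseteq> I" "\<And>k. \<psi> k y = 0 \<Longrightarrow> h k = 0"
  shows "(\<Sum>k\<in>A y. h k) = (\<Sum>k\<in>F. h k)"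
proof (rule sum.mono_neutral_left[OF assms(1,2)])
  show "\<forall>i\<in>F - A y. h i = 0" using assms(3,4) by (auto simp: A_def)
qed

lemma g\<psi>_zero: "\<psi> k y = 0 \<Longrightarrow> g\<psi> k y = 0"
  unfolding \<psi>_def g\<psi>_def by (rule bgrad_zero) simp

lemma \<psi>_deriv: "(\<psi> k has_derivative (\<lambda>w. g\<psi> k x \<bullet> w)) (at x)"
proof -
  have "(bump (rad (fst k)) (snd k) has_derivative (\<lambda>w. g\<psi> k x \<bullet> w)) (at x)"
    unfolding g\<psi>_def by (rule bump_deriv) simp
  moreover have "bump (rad (fst k)) (snd k) = \<psi> k" by (auto simp: \<psi>_def)
  ultimately show ?thesis by simp
qed

lemma \<psi>_cont: "continuous_on T (\<psi> k)"
proof -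
  have "continuous_on T (bump (rad (fst k)) (snd k))" by (rule bump_cont) simp
  moreover have "bump (rad (fst k)) (snd k) = \<psi> k" by (auto simp: \<psi>_def)
  ultimately show ?thesis by simp
qed

lemma g\<psi>_cont: "continuous_on T (g\<psi> k)"
proof -
  have "continuous_on T (bgrad (rad (fst k)) (snd k))" by (rule bgrad_cont) simp
  moreover have "bgrad (rad (fst k)) (snd k) = g\<psi> k" by (auto simp: g\<psi>_def)
  ultimately show ?thesis by simp
qed

definition "Eo c g y = (\<Sum>k\<in>A y. \<psi> k y * (c k + g k \<bullet> y)) / S y"
definition "gEo c g y = (1 / S y) *\<^sub>R
   (\<Sum>k\<in>A y. \<psi> k y *\<^sub>R g k + ((c k + g k \<bullet> y) - Eo c g y) *\<^sub>R g\<psi> k y)"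

lemma Eo_F:
  assumes "finite F" "A y \<subseteq> F" "F \<subseteq> I"
  shows "Eo c g y = (\<Sum>k\<in>F. \<psi> k y * (c k + g k \<bullet> y)) / (\<Sum>k\<in>F. \<psi> k y)"
    and "S y = (\<Sum>k\<in>F. \<psi> k y)"
    and "gEo c g y = (1 / (\<Sum>k\<in>F. \<psi> k y)) *\<^sub>R
      (\<Sum>k\<in>F. \<psi> k y *\<^sub>R g k + ((c k + g k \<bullet> y) - (\<Sum>k\<in>F. \<psi> k y * (c k + g k \<bullet> y)) / (\<Sum>k\<in>F. \<psi> k y)) *\<^sub>R g\<psi> k y)"
proof -
  show S: "S y = (\<Sum>k\<in>F. \<psi> k y)" unfolding S_def by (rule sum_AF[OF assms]) simp
  show E: "Eo c g y = (\<Sum>k\<in>F. \<psi> k y * (c k + g k \<bullet> y)) / (\<Sum>k\<in>F. \<psi> k y)"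
    unfolding Eo_def S[symmetric] by (subst sum_AF[OF assms]) auto
  show "gEo c g y = (1 / (\<Sum>k\<in>F. \<psi> k y)) *\<^sub>R
      (\<Sum>k\<in>F. \<psi> k y *\<^sub>R g k + ((c k + g k \<bullet> y) - (\<Sum>k\<in>F. \<psi> k y * (c k + g k \<bullet> y)) / (\<Sum>k\<in>F. \<psi> k y)) *\<^sub>R g\<psi> k y)"
    unfolding gEo_def E S by (subst sum_AF[OF assms]) (auto simp: g\<psi>_zero)
qed

end

context pu begin

lemma F0_props: assumes "x \<notin> K"
  shows "finite (F0 x)" "F0 x \<subseteq> I" "\<And>y. y \<in> ball x (\<delta> x / 2) \<Longrightarrow> A y \<subseteq> F0 x"
    "\<And>y. y \<in> ball x (\<delta> x / 2) \<Longrightarrow> y \<notin> K"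
  using F0_finite[OF assms] F0_cover[OF assms] ball_notK[OF assms] by (auto simp: F0_def)

lemma Eo_deriv: assumes x: "x \<notin> K"
  shows "(Eo c g has_derivative (\<lambda>w. gEo c g x \<bullet> w)) (at x)"
proof -
  let ?F = "F0 x" and ?N = "ball x (\<delta> x / 2)"
  note FP = F0_props[OF x]
  have xN: "x \<in> ?N" using \<delta>_pos[OF x] by simp
  define T where "T y = (\<Sum>k\<in>?F. \<psi> k y * (c k + g k \<bullet> y))" for y
  define s where "s y = (\<Sum>k\<in>?F. \<psi> k y)" for y
  have eq: "T y / s y = Eo c g y" if "y \<in> ?N" for y
    using Eo_F(1)[OF FP(1) FP(3)[OF that] FP(2)] by (simp add: T_def s_def)
  have sx: "s x > 0" using Eo_F(2)[OF FP(1) FP(3)[OF xN] FP(2)] S_pos[OF x] by (simp add: s_def)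
  have dT: "(T has_derivative (\<lambda>w. \<Sum>k\<in>?F. \<psi> k x * (g k \<bullet> w) + (g\<psi> k x \<bullet> w) * (c k + g k \<bullet> x))) (at x)"
    unfolding T_def by (auto intro!: derivative_eq_intros \<psi>_deriv)
  have ds: "(s has_derivative (\<lambda>w. \<Sum>k\<in>?F. g\<psi> k x \<bullet> w)) (at x)"
    unfolding s_def by (auto intro!: derivative_eq_intros \<psi>_deriv)
  have dq: "((\<lambda>y. T y / s y) has_derivative
      (\<lambda>w. - T x * (inverse (s x) * (\<Sum>k\<in>?F. g\<psi> k x \<bullet> w) * inverse (s x)) +
            (\<Sum>k\<in>?F. \<psi> k x * (g k \<bullet> w) + (g\<psi> k x \<bullet> w) * (c k + g k \<bullet> x)) / s x)) (at x)"
    using has_derivative_divide[OF dT ds] sx by simp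
  have lin: "- T x * (inverse (s x) * (\<Sum>k\<in>?F. g\<psi> k x \<bullet> w) * inverse (s x)) +
            (\<Sum>k\<in>?F. \<psi> k x * (g k \<bullet> w) + (g\<psi> k x \<bullet> w) * (c k + g k \<bullet> x)) / s x
           = gEo c g x \<bullet> w" for w
  proof -
    have "gEo c g x \<bullet> w = (1 / s x) * ((\<Sum>k\<in>?F. \<psi> k x * (g k \<bullet> w)) +
          (\<Sum>k\<in>?F. (c k + g k \<bullet> x) * (g\<psi> k x \<bullet> w)) - (T x / s x) * (\<Sum>k\<in>?F. g\<psi> k x \<bullet> w))"
      unfolding Eo_F(3)[OF FP(1) FP(3)[OF xN] FP(2)] T_def[symmetric] s_def[symmetric]
      by (simp add: inner_sum_left inner_add_left sum.distrib left_diff_distrib sum_subtractf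
          sum_distrib_left)
    also have "\<dots> = - T x * (inverse (s x) * (\<Sum>k\<in>?F. g\<psi> k x \<bullet> w) * inverse (s x)) +
            (\<Sum>k\<in>?F. \<psi> k x * (g k \<bullet> w) + (g\<psi> k x \<bullet> w) * (c k + g k \<bullet> x)) / s x"
      using sx by (simp add: sum.distrib field_simps mult.commute)
    finally show ?thesis by simp
  qed
  have "((\<lambda>y. T y / s y) has_derivative (\<lambda>w. gEo c g x \<bullet> w)) (at x)"
    using dq lin by simp
  then show ?thesis
    by (rule has_derivative_transform_within_open[OF _ open_ball xN]) (simp add: eq)
qed

lemma gEo_cont: assumes x: "x \<notin> K" shows "isCont (gEo c g) x"
proof -
  let ?F = "F0 x" and ?N = "ball x (\<delta> x / 2)"
  note FP = F0_props[OF x]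
  have xN: "x \<in> ?N" using \<delta>_pos[OF x] by simp
  have spos: "(\<Sum>k\<in>?F. \<psi> k y) \<noteq> 0" if "y \<in> ?N" for y
    using Eo_F(2)[OF FP(1) FP(3)[OF that] FP(2)] S_pos[OF FP(4)[OF that]] by simp
  have "continuous_on ?N (\<lambda>y. (1 / (\<Sum>k\<in>?F. \<psi> k y)) *\<^sub>R
      (\<Sum>k\<in>?F. \<psi> k y *\<^sub>R g k + ((c k + g k \<bullet> y) - (\<Sum>k\<in>?F. \<psi> k y * (c k + g k \<bullet> y)) / (\<Sum>k\<in>?F. \<psi> k y)) *\<^sub>R g\<psi> k y))"
    using spos by (intro continuous_intros \<psi>_cont g\<psi>_cont) auto
  then have "continuous_on ?N (gEo c g)"
    by (rule continuous_on_eq) (use Eo_F(3)[OF FP(1) FP(3) FP(2)] in auto)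
  moreover have "x \<in> interior ?N" using xN by (simp add: interior_open)
  ultimately show ?thesis by (rule continuous_on_interior)
qed

lemma Eo_cont: assumes x: "x \<notin> K" shows "isCont (Eo c g) x"
  using Eo_deriv[OF x] has_derivative_continuous by blast

lemma Eo_bound:
  assumes y: "y \<notin> K" and B: "\<And>k. k \<in> A y \<Longrightarrow> \<bar>c k + g k \<bullet> y - z\<bar> \<le> B"
  shows "\<bar>Eo c g y - z\<bar> \<le> B"
proof -
  have sp: "S y > 0" using S_pos[OF y] .
  have "Eo c g y - z = (\<Sum>k\<in>A y. \<psi> k y * (c k + g k \<bullet> y - z)) / S y"
    using sp by (simp add: Eo_def S_def field_simps sum_subtractf right_diff_distrib sum_distrib_right sum_distrib_left)
  also have "\<bar>\<dots>\<bar> \<le> (\<Sum>k\<in>A y. \<psi> k y * B) / S y"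
  proof -
    have "\<bar>\<Sum>k\<in>A y. \<psi> k y * (c k + g k \<bullet> y - z)\<bar> \<le> (\<Sum>k\<in>A y. \<bar>\<psi> k y * (c k + g k \<bullet> y - z)\<bar>)"
      by (rule sum_abs)
    also have "\<dots> \<le> (\<Sum>k\<in>A y. \<psi> k y * B)"
      by (rule sum_mono) (simp add: abs_mult \<psi>_nonneg B mult_left_mono)
    finally show ?thesis using sp by (simp add: abs_divide divide_right_mono)
  qed
  also have "\<dots> = B" using sp by (simp add: S_def sum_distrib_right[symmetric])
  finally show ?thesis .
qed

lemma gEo_bound:
  assumes y: "y \<notin> K"
    and B1: "\<And>k. k \<in> A y \<Longrightarrow> norm (g k - g0) \<le> B1"
    and B2: "\<And>k. k \<in> A y \<Longrightarrow> \<bar>c k + g k \<bullet> y - z\<bar> \<le> B2"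
  shows "norm (gEo c g y - g0) \<le> B1 + (32/9) * B2 * NC * 26 / \<delta> y"
proof -
  have sp: "S y > 0" using S_pos[OF y] .
  have sge: "S y \<ge> 9/16" using S_ge[OF y] .
  obtain k0 where k0: "k0 \<in> A y" using A_ne[OF y] by blast
  have B2p: "B2 \<ge> 0" using B2[OF k0] by linarith
  have dpos: "\<delta> y > 0" using \<delta>_pos[OF y] .
  have E: "\<bar>Eo c g y - z\<bar> \<le> B2" by (rule Eo_bound[OF y B2])
  have Q: "\<bar>(c k + g k \<bullet> y) - Eo c g y\<bar> \<le> 2 * B2" if "k \<in> A y" for k
    using B2[OF that] E by linarith
  have "gEo c g y - g0 = (1 / S y) *\<^sub>R
     ((\<Sum>k\<in>A y. \<psi> k y *\<^sub>R (g k - g0)) + (\<Sum>k\<in>A y. ((c k + g k \<bullet> y) - Eo c g y) *\<^sub>R g\<psi> k y))"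
  proof -
    let ?X = "(\<Sum>k\<in>A y. \<psi> k y *\<^sub>R g k)"
    let ?R = "(\<Sum>k\<in>A y. ((c k + g k \<bullet> y) - Eo c g y) *\<^sub>R g\<psi> k y)"
    have c: "(\<Sum>k\<in>A y. \<psi> k y *\<^sub>R (g k - g0)) = ?X - S y *\<^sub>R g0"
      by (simp add: S_def scaleR_diff_right sum_subtractf scaleR_sum_left)
    have a: "gEo c g y = (1 / S y) *\<^sub>R (?X + ?R)" by (simp add: gEo_def sum.distrib)
    have b: "g0 = (1 / S y) *\<^sub>R (S y *\<^sub>R g0)" using sp by simp
    have "gEo c g y - g0 = (1 / S y) *\<^sub>R (?X + ?R) - (1 / S y) *\<^sub>R (S y *\<^sub>R g0)"
      using a b by simp
    also have "\<dots> = (1 / S y) *\<^sub>R ((?X - S y *\<^sub>R g0) + ?R)"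
      by (simp add: scaleR_diff_right[symmetric] algebra_simps)
    finally show ?thesis by (simp only: c)
  qed
  also have "norm \<dots> \<le> (1 / S y) * ((\<Sum>k\<in>A y. \<psi> k y * B1) + (\<Sum>k\<in>A y. 2 * B2 * norm (g\<psi> k y)))"
  proof -
    have n1: "norm (\<Sum>k\<in>A y. \<psi> k y *\<^sub>R (g k - g0)) \<le> (\<Sum>k\<in>A y. \<psi> k y * B1)"
      by (rule order_trans[OF norm_sum sum_mono]) (simp add: \<psi>_nonneg B1 mult_left_mono)
    have n2: "norm (\<Sum>k\<in>A y. ((c k + g k \<bullet> y) - Eo c g y) *\<^sub>R g\<psi> k y) \<le> (\<Sum>k\<in>A y. 2 * B2 * norm (g\<psi> k y))"
      by (rule order_trans[OF norm_sum sum_mono]) (simp add: Q mult_right_mono)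
    have "norm ((\<Sum>k\<in>A y. \<psi> k y *\<^sub>R (g k - g0)) + (\<Sum>k\<in>A y. ((c k + g k \<bullet> y) - Eo c g y) *\<^sub>R g\<psi> k y))
       \<le> (\<Sum>k\<in>A y. \<psi> k y * B1) + (\<Sum>k\<in>A y. 2 * B2 * norm (g\<psi> k y))"
      using n1 n2 by (rule norm_triangle_le[OF add_mono])
    then show ?thesis using sp by (simp add: divide_right_mono)
  qed
  also have "\<dots> = B1 + (1 / S y) * (2 * B2 * (\<Sum>k\<in>A y. norm (g\<psi> k y)))"
  proof -
    have e1: "(\<Sum>k\<in>A y. \<psi> k y * B1) = S y * B1" by (simp add: S_def sum_distrib_right)
    have e2: "(\<Sum>k\<in>A y. 2 * B2 * norm (g\<psi> k y)) = 2 * B2 * (\<Sum>k\<in>A y. norm (g\<psi> k y))"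
      by (simp add: sum_distrib_left)
    show ?thesis unfolding e1 e2 using sp by (simp add: field_simps)
  qed
  also have "\<dots> \<le> B1 + (16/9) * (2 * B2 * (NC * 26 / \<delta> y))"
  proof -
    have "(1 / S y) \<le> 16/9" using sge sp by (simp add: divide_simps)
    moreover have "2 * B2 * (\<Sum>k\<in>A y. norm (g\<psi> k y)) \<le> 2 * B2 * (NC * 26 / \<delta> y)"
      using mult_left_mono[OF gsum_bound[OF y], of "2 * B2"] B2p by simp
    moreover have "0 \<le> 2 * B2 * (\<Sum>k\<in>A y. norm (g\<psi> k y))" using B2p by (simp add: sum_nonneg)
    ultimately show ?thesis using sp by (smt (verit) mult_mono divide_nonneg_nonneg)
  qed
  also have "\<dots> = B1 + (32/9) * B2 * NC * 26 / \<delta> y" by simp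
  finally show ?thesis .
qed

end

lemma ucont_bounded:
  fixes h :: "'a::euclidean_space \<Rightarrow> 'b::euclidean_space"
  assumes "uniformly_continuous_on X h" "bounded X"
  shows "bounded (h ` X)"
proof -
  obtain g where g: "uniformly_continuous_on (closure X) g" "\<And>x. x \<in> X \<Longrightarrow> h x = g x"
    using uniformly_continuous_on_extension_on_closure[OF assms(1)] by metis
  have "compact (g ` closure X)"
    using g(1) assms(2) by (intro compact_continuous_image uniformly_continuous_imp_continuous)
      (auto simp: compact_closure)
  then have "bounded (g ` closure X)" by (rule compact_imp_bounded)
  moreover have "h ` X \<subseteq> g ` closure X" using g(2) closure_subset by fastforce
  ultimately show ?thesis by (rule bounded_subset)
qed

lemma onorm_inner_le: "onorm (\<lambda>w::'a::euclidean_space. v \<bullet> w) \<le> norm v"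
  by (rule onorm_le) (simp add: Cauchy_Schwarz_ineq2)

lemma curve_est:
  fixes f :: "'a::euclidean_space \<Rightarrow> real" and \<gamma> :: "real \<Rightarrow> 'a"
  assumes op: "open \<Omega>" and diff: "\<And>z. z \<in> \<Omega> \<Longrightarrow> f differentiable (at z)"
    and \<gamma>: "\<gamma> 0 = x" "\<gamma> 1 = y" "\<gamma> ` {0..1} \<subseteq> \<Omega>" "M-lipschitz_on {0..1} \<gamma>"
    and Mpos: "M > 0"
    and B: "\<And>z. z \<in> \<Omega> \<Longrightarrow> dist z x < 2 * M \<Longrightarrow> norm (grad f z - g) \<le> B"
  shows "\<bar>f y - f x - g \<bullet> (y - x)\<bar> \<le> B * M"
proof -
  have cont: "continuous_on {0..1} \<gamma>" using \<gamma>(4) by (rule lipschitz_on_continuous_on)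
  have "compact (\<gamma> ` {0..1})" using cont by (intro compact_continuous_image) (auto simp: compact_Icc)
  then obtain e where e: "e > 0" "(\<Union>z\<in>\<gamma> ` {0..1}. ball z e) \<subseteq> \<Omega>"
    using compact_subset_open_imp_ball_epsilon_subset[OF _ op \<gamma>(3)] by metis
  define e' where "e' = min e M"
  have e': "e' > 0" "e' \<le> e" "e' \<le> M" using e Mpos by (auto simp: e'_def)
  obtain n :: nat where n: "M < real n * e'" using ex_less_of_nat_mult[OF e'(1)] by blast
  have npos: "n > 0" using n Mpos by (cases n) auto
  define \<phi> where "\<phi> z = f z - g \<bullet> z" for z
  have Bnn: "B \<ge> 0"
  proof -
    have "x \<in> \<Omega>" using \<gamma>(1,3) by force
    then show ?thesis using B[of x] Mpos by (smt (verit) dist_self norm_ge_zero)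
  qed
  have step: "\<bar>\<phi> (\<gamma> (real i / n)) - \<phi> x\<bar> \<le> B * M * real i / n" if "i \<le> n" for i
    using that
  proof (induction i)
    case 0
    then show ?case using \<gamma>(1) by simp
  next
    case (Suc i)
    let ?s = "real i / n" and ?t = "real (Suc i) / n"
    have st: "?s \<in> {0..1}" "?t \<in> {0..1}" using Suc.prems npos by auto
    let ?a = "\<gamma> ?s" and ?b = "\<gamma> ?t"
    have dab: "dist ?a ?b \<le> M / n"
    proof -
      have "dist ?a ?b \<le> M * dist ?s ?t" by (rule lipschitz_onD[OF \<gamma>(4) st])
      also have "dist ?s ?t = 1 / n" using npos by (simp add: dist_real_def divide_simps)
      finally show ?thesis by simp
    qed
    have "M / n < e'" using n npos by (simp add: divide_less_eq mult.commute)
    then have bS: "?b \<in> ball ?a e'" using dab by (simp)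
    have aim: "?a \<in> \<gamma> ` {0..1}" using st(1) by (rule imageI)
    have "ball ?a e \<subseteq> \<Omega>" using e(2) aim by blast
    moreover have "ball ?a e' \<subseteq> ball ?a e" using e'(2) by (rule subset_ball)
    ultimately have Ssub: "ball ?a e' \<subseteq> \<Omega>" by (rule subset_trans[rotated])
    have dax: "dist ?a x \<le> M * ?s"
      using lipschitz_onD[OF \<gamma>(4) st(1), of 0] \<gamma>(1) by (simp add: dist_real_def)
    have "?s \<le> 1" using st by simp
    then have dax': "dist ?a x \<le> M" using dax Mpos by (smt (verit) mult_left_le)
    have derz: "(\<phi> has_derivative (\<lambda>w. (grad f z - g) \<bullet> w)) (at z within ball ?a e')"
      if "z \<in> ball ?a e'" for z
    proof -
      have "(f has_derivative (\<lambda>w. grad f z \<bullet> w)) (at z)"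
        using grad_deriv diff Ssub that by blast
      then have "(\<phi> has_derivative (\<lambda>w. grad f z \<bullet> w - g \<bullet> w)) (at z)"
        unfolding \<phi>_def by (auto intro!: derivative_eq_intros)
      then show ?thesis by (simp add: inner_diff_left has_derivative_at_withinI)
    qed
    have onb: "onorm (\<lambda>w. (grad f z - g) \<bullet> w) \<le> B" if "z \<in> ball ?a e'" for z
    proof -
      have "dist z x \<le> dist z ?a + dist ?a x" by (rule dist_triangle)
      also have "\<dots> < e' + M" using that dax' by (simp add: dist_commute)
      finally have "dist z x < 2 * M" using e'(3) by simp
      then show ?thesis using B[of z] Ssub that onorm_inner_le[of "grad f z - g"] by force
    qed
    have aS: "?a \<in> ball ?a e'" using e'(1) by simp
    have "norm (\<phi> ?b - \<phi> ?a) \<le> B * norm (?b - ?a)"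
      by (rule differentiable_bound[OF convex_ball derz onb bS aS])
    also have "\<dots> \<le> B * (M / n)"
    proof -
      have "norm (?b - ?a) \<le> M / n" using dab by (simp add: dist_norm norm_minus_commute)
      then show ?thesis using mult_left_mono[OF _ Bnn] by blast
    qed
    finally have "\<bar>\<phi> ?b - \<phi> ?a\<bar> \<le> B * (M / n)" by simp
    moreover have "\<bar>\<phi> ?a - \<phi> x\<bar> \<le> B * M * real i / n" using Suc by simp
    ultimately have "\<bar>\<phi> ?b - \<phi> x\<bar> \<le> B * M * real i / n + B * (M / n)" by linarith
    also have "\<dots> = B * M * real (Suc i) / n" by (simp add: add_divide_distrib algebra_simps)
    finally show ?case .
  qed
  have "\<bar>\<phi> (\<gamma> (real n / n)) - \<phi> x\<bar> \<le> B * M * real n / n" by (rule step) simp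
  then show ?thesis using npos \<gamma>(2) by (simp add: \<phi>_def inner_diff_right)
qed


locale dom = pu +
  assumes op: "open \<Omega>" and ulq: "unif_loc_quasiconvex \<Omega>"
begin

definition "qcP r L \<longleftrightarrow> r > 0 \<and> L \<ge> 1 \<and> (\<forall>x\<in>\<Omega>. \<forall>y\<in>\<Omega>. dist x y \<le> r \<longrightarrow>
        (\<exists>\<gamma>::real \<Rightarrow> 'a. \<gamma> 0 = x \<and> \<gamma> 1 = y \<and> \<gamma> ` {0..1} \<subseteq> \<Omega> \<and>
              (L * dist x y)-lipschitz_on {0..1} \<gamma>))"
definition "qr = fst (SOME p. qcP (fst p) (snd p))"
definition "qL = snd (SOME p. qcP (fst p) (snd p))"

lemma qc: "qcP qr qL"
proof -
  have "\<exists>p. qcP (fst p) (snd p)" using ulq unfolding unif_loc_quasiconvex_def qcP_def by force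
  then have "qcP (fst (SOME p. qcP (fst p) (snd p))) (snd (SOME p. qcP (fst p) (snd p)))"
    by (rule someI_ex)
  then show ?thesis by (simp add: qr_def qL_def)
qed

lemma qr_pos: "qr > 0" and qL_ge: "qL \<ge> 1" using qc by (auto simp: qcP_def)

lemma qc_curve: assumes "x \<in> \<Omega>" "y \<in> \<Omega>" "dist x y \<le> qr"
  obtains \<gamma> :: "real \<Rightarrow> 'a" where "\<gamma> 0 = x" "\<gamma> 1 = y" "\<gamma> ` {0..1} \<subseteq> \<Omega>"
    "(qL * dist x y)-lipschitz_on {0..1} \<gamma>"
  using qc assms unfolding qcP_def by blast

definition "C0 = 2 * real DIM('a) * qL + 2 / qr + real DIM('a)"

lemma C0_pos: "C0 > 0"
  unfolding C0_def using qr_pos qL_ge dd_pos by (intro add_pos_pos mult_pos_pos) auto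

end

locale fdom = dom +
  fixes f :: "'a \<Rightarrow> real"
  assumes fC1: "C1_closure \<Omega> f"
begin

definition "Nf = C1_norm \<Omega> f"

lemma f_diff: "x \<in> \<Omega> \<Longrightarrow> f differentiable (at x)" using fC1 by (simp add: C1_closure_def)
lemma f_uc: "uniformly_continuous_on \<Omega> f" using fC1 by (simp add: C1_closure_def)
lemma pd_uc: "i \<in> Basis \<Longrightarrow> uniformly_continuous_on \<Omega> (partial_deriv f i)"
  using fC1 by (simp add: C1_closure_def)

lemma norm_set_bdd:
  "bdd_above ({0} \<union> {\<bar>f x\<bar> | x. x \<in> \<Omega>} \<union> {\<bar>partial_deriv f i x\<bar> | x i. x \<in> \<Omega> \<and> i \<in> Basis})"
proof -
  have "bounded (f ` \<Omega>)" by (rule ucont_bounded[OF f_uc bdd])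
  then obtain M1 where M1: "\<And>x. x \<in> \<Omega> \<Longrightarrow> \<bar>f x\<bar> \<le> M1" unfolding bounded_iff by force
  have "bounded (\<Union>i\<in>Basis. partial_deriv f i ` \<Omega>)"
    by (rule bounded_UN) (auto intro: ucont_bounded[OF pd_uc bdd])
  then obtain M2 where M2: "\<And>x i. x \<in> \<Omega> \<Longrightarrow> i \<in> Basis \<Longrightarrow> \<bar>partial_deriv f i x\<bar> \<le> M2"
    unfolding bounded_iff by force
  have "z \<le> \<bar>M1\<bar> + \<bar>M2\<bar>"
    if zin: "z \<in> {0} \<union> {\<bar>f x\<bar> | x. x \<in> \<Omega>} \<union> {\<bar>partial_deriv f i x\<bar> | x i. x \<in> \<Omega> \<and> i \<in> Basis}" for z
  proof -
    consider "z = 0" | x where "x \<in> \<Omega>" "z = \<bar>f x\<bar>" | x i where "x \<in> \<Omega>" "i \<in> Basis" "z = \<bar>partial_deriv f i x\<bar>"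
      using zin by blast
    then show ?thesis
    proof cases
      case 1 then show ?thesis by simp
    next
      case 2 then show ?thesis using M1[of x] by linarith
    next
      case 3 then show ?thesis using M2[of x i] by linarith
    qed
  qed
  then show ?thesis unfolding bdd_above_def by blast
qed

lemma Nf_nonneg: "Nf \<ge> 0"
  unfolding Nf_def C1_norm_def by (rule cSup_upper[OF _ norm_set_bdd]) simp

lemma f_bnd: "x \<in> \<Omega> \<Longrightarrow> \<bar>f x\<bar> \<le> Nf"
  unfolding Nf_def C1_norm_def by (rule cSup_upper[OF _ norm_set_bdd]) blast

lemma pd_bnd: "x \<in> \<Omega> \<Longrightarrow> i \<in> Basis \<Longrightarrow> \<bar>partial_deriv f i x\<bar> \<le> Nf"
  unfolding Nf_def C1_norm_def by (rule cSup_upper[OF _ norm_set_bdd]) blast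

lemma grad_bnd: assumes "x \<in> \<Omega>" shows "norm (grad f x) \<le> real DIM('a) * Nf"
proof -
  have "norm (grad f x) \<le> (\<Sum>i\<in>Basis. norm (partial_deriv f i x *\<^sub>R i))"
    unfolding grad_def by (rule norm_sum)
  also have "\<dots> \<le> (\<Sum>i\<in>(Basis::'a set). Nf)"
    by (rule sum_mono) (simp add: pd_bnd assms)
  also have "\<dots> = real DIM('a) * Nf" by simp
  finally show ?thesis .
qed

lemma grad_uc: "uniformly_continuous_on \<Omega> (grad f)"
  unfolding grad_def
  by (intro uniformly_continuous_on_sum bounded_linear.uniformly_continuous_on[OF bounded_linear_scaleR_left] pd_uc)

lemma J1:
  assumes e: "e > 0"
  shows "\<exists>\<eta>>0. \<forall>x\<in>\<Omega>. \<forall>y\<in>\<Omega>. dist x y < \<eta> \<longrightarrow> \<bar>f y - f x - grad f x \<bullet> (y - x)\<bar> \<le> e * dist x y"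
proof -
  have eL: "e / qL > 0" using e qL_ge by simp
  obtain d where d: "d > 0" "\<And>x z. x \<in> \<Omega> \<Longrightarrow> z \<in> \<Omega> \<Longrightarrow> dist z x < d \<Longrightarrow> dist (grad f z) (grad f x) < e / qL"
    using grad_uc eL unfolding uniformly_continuous_on_def by metis
  define \<eta> where "\<eta> = min qr (d / (2 * qL))"
  have \<eta>: "\<eta> > 0" using qr_pos d qL_ge by (simp add: \<eta>_def)
  have "\<bar>f y - f x - grad f x \<bullet> (y - x)\<bar> \<le> e * dist x y" if xy: "x \<in> \<Omega>" "y \<in> \<Omega>" "dist x y < \<eta>" for x y
  proof (cases "x = y")
    case True then show ?thesis by simp
  next
    case False
    have dxy: "dist x y \<le> qr" using xy by (simp add: \<eta>_def)
    obtain \<gamma> :: "real \<Rightarrow> 'a" where \<gamma>: "\<gamma> 0 = x" "\<gamma> 1 = y" "\<gamma> ` {0..1} \<subseteq> \<Omega>" "(qL * dist x y)-lipschitz_on {0..1} \<gamma>"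
      using qc_curve[OF xy(1,2) dxy] by blast
    have M: "qL * dist x y > 0" using False qL_ge by simp
    have "\<bar>f y - f x - grad f x \<bullet> (y - x)\<bar> \<le> (e / qL) * (qL * dist x y)"
    proof (rule curve_est[OF op f_diff \<gamma> M])
      fix z assume z: "z \<in> \<Omega>" "dist z x < 2 * (qL * dist x y)"
      have "2 * (qL * dist x y) \<le> d"
      proof -
        have "dist x y \<le> d / (2 * qL)" using xy(3) by (simp add: \<eta>_def)
        then show ?thesis using qL_ge by (simp add: field_simps)
      qed
      then have "dist z x < d" using z by simp
      then show "norm (grad f z - grad f x) \<le> e / qL" using d(2)[OF xy(1) z(1)] by (simp add: dist_norm less_imp_le)
    qed
    also have "\<dots> = e * dist x y" using qL_ge by simp
    finally show ?thesis .
  qed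
  then show ?thesis using \<eta> by blast
qed

lemma J2:
  assumes xy: "x \<in> \<Omega>" "y \<in> \<Omega>"
  shows "\<bar>f y - f x - grad f x \<bullet> (y - x)\<bar> \<le> C0 * Nf * dist x y"
proof (cases "dist x y \<le> qr")
  case True
  show ?thesis
  proof (cases "x = y")
    case True then show ?thesis by simp
  next
    case False
    obtain \<gamma> :: "real \<Rightarrow> 'a" where \<gamma>: "\<gamma> 0 = x" "\<gamma> 1 = y" "\<gamma> ` {0..1} \<subseteq> \<Omega>" "(qL * dist x y)-lipschitz_on {0..1} \<gamma>"
      using qc_curve[OF xy(1,2) True] by blast
    have M: "qL * dist x y > 0" using False qL_ge by simp
    have "\<bar>f y - f x - grad f x \<bullet> (y - x)\<bar> \<le> (2 * real DIM('a) * Nf) * (qL * dist x y)"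
    proof (rule curve_est[OF op f_diff \<gamma> M])
      fix z assume z: "z \<in> \<Omega>" "dist z x < 2 * (qL * dist x y)"
      have "norm (grad f z - grad f x) \<le> norm (grad f z) + norm (grad f x)" by (rule norm_triangle_ineq4)
      also have "\<dots> \<le> 2 * real DIM('a) * Nf" using grad_bnd[OF z(1)] grad_bnd[OF xy(1)] by simp
      finally show "norm (grad f z - grad f x) \<le> 2 * real DIM('a) * Nf" .
    qed
    also have "\<dots> \<le> C0 * Nf * dist x y"
    proof -
      have "2 * real DIM('a) * qL \<le> C0" using qr_pos by (simp add: C0_def)
      then show ?thesis using Nf_nonneg zero_le_dist[of x y]
        by (metis (no_types, opaque_lifting) mult.assoc mult.commute mult_right_mono zero_le_mult_iff)
    qed
    finally show ?thesis .
  qed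
next
  case False
  have "\<bar>f y - f x - grad f x \<bullet> (y - x)\<bar> \<le> \<bar>f y\<bar> + \<bar>f x\<bar> + \<bar>grad f x \<bullet> (y - x)\<bar>" by linarith
  also have "\<bar>grad f x \<bullet> (y - x)\<bar> \<le> real DIM('a) * Nf * dist x y"
  proof -
    have "\<bar>grad f x \<bullet> (y - x)\<bar> \<le> norm (grad f x) * norm (y - x)" by (rule Cauchy_Schwarz_ineq2)
    also have "\<dots> \<le> real DIM('a) * Nf * dist x y"
      using grad_bnd[OF xy(1)] by (simp add: dist_norm norm_minus_commute mult_right_mono)
    finally show ?thesis .
  qed
  also have "\<bar>f y\<bar> + \<bar>f x\<bar> \<le> 2 * Nf" using f_bnd xy by (smt (verit))
  also have "2 * Nf \<le> (2 / qr) * Nf * dist x y"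
  proof -
    have "1 \<le> dist x y / qr" using False qr_pos by simp
    then have "2 * Nf * 1 \<le> 2 * Nf * (dist x y / qr)" using Nf_nonneg by (intro mult_left_mono) auto
    then show ?thesis by (simp add: field_simps)
  qed
  finally have "\<bar>f y - f x - grad f x \<bullet> (y - x)\<bar> \<le> (2 / qr + real DIM('a)) * Nf * dist x y"
    by (simp add: algebra_simps)
  also have "\<dots> \<le> C0 * Nf * dist x y"
    using qL_ge Nf_nonneg zero_le_dist[of x y] dd_pos
    by (intro mult_right_mono) (auto simp: C0_def)
  finally show ?thesis .
qed

end

lemma ext_closure:
  fixes h :: "'a::euclidean_space \<Rightarrow> 'b::euclidean_space"
  assumes uc: "uniformly_continuous_on X h"
    and H_def: "\<And>x. H x = (if x \<in> X then h x else Lim (at x within X) h)"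
  shows "\<And>x. x \<in> closure X \<Longrightarrow> (h \<longlongrightarrow> H x) (at x within X)"
    and "continuous_on (closure X) H"
    and "\<And>x. x \<in> X \<Longrightarrow> H x = h x"
proof -
  obtain g where g: "uniformly_continuous_on (closure X) g" "\<And>x. x \<in> X \<Longrightarrow> h x = g x"
    using uniformly_continuous_on_extension_on_closure[OF uc] by metis
  have gc: "continuous_on (closure X) g" using g(1) uniformly_continuous_imp_continuous by blast
  have hc: "continuous_on X h" using uc uniformly_continuous_imp_continuous by blast
  have hg: "(h \<longlongrightarrow> g x) (at x within X)" if "x \<in> closure X" for x
  proof -
    have "(g \<longlongrightarrow> g x) (at x within closure X)"
      using gc that by (simp add: continuous_on_def)
    then have "(g \<longlongrightarrow> g x) (at x within X)"
      by (rule tendsto_within_subset) (rule closure_subset)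
    then show ?thesis by (rule Lim_transform_within[where d=1]) (auto simp: g(2))
  qed
  have Hg: "H x = g x" if "x \<in> closure X" for x
  proof (cases "x \<in> X")
    case True then show ?thesis by (simp add: H_def g(2))
  next
    case False
    then have "x islimpt X" using that unfolding closure_def by blast
    then have "\<not> trivial_limit (at x within X)" using trivial_limit_within by blast
    then have "Lim (at x within X) h = g x" using hg[OF that] by (rule tendsto_Lim)
    then show ?thesis using False by (simp add: H_def)
  qed
  show "(h \<longlongrightarrow> H x) (at x within X)" if "x \<in> closure X" for x
    unfolding Hg[OF that] by (rule hg[OF that])
  show "continuous_on (closure X) H" by (rule continuous_on_eq[OF gc]) (simp add: Hg)
  show "H x = h x" if "x \<in> X" for x using that by (simp add: H_def)
qed

lemma closure_limpt_nontriv: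
  fixes x :: "'a::euclidean_space"
  assumes "open X" "x \<in> closure X"
  shows "\<not> trivial_limit (at x within X)"
proof (cases "x \<in> X")
  case True
  have "at x within X = at x" by (rule at_within_open[OF True assms(1)])
  moreover have "\<not> trivial_limit (at x)" by (rule trivial_limit_at)
  ultimately show ?thesis by simp
next
  case False
  then have "x islimpt X" using assms(2) unfolding closure_def by blast
  then show ?thesis using trivial_limit_within by blast
qed

context fdom begin

definition "FF x = (if x \<in> \<Omega> then f x else Lim (at x within \<Omega>) f)"
definition "GG x = (if x \<in> \<Omega> then grad f x else Lim (at x within \<Omega>) (grad f))"

lemma FF_props:
  "\<And>x. x \<in> K \<Longrightarrow> (f \<longlongrightarrow> FF x) (at x within \<Omega>)"
  "continuous_on K FF" "\<And>x. x \<in> \<Omega> \<Longrightarrow> FF x = f x"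
  using ext_closure[OF f_uc FF_def] by blast+

lemma GG_props:
  "\<And>x. x \<in> K \<Longrightarrow> (grad f \<longlongrightarrow> GG x) (at x within \<Omega>)"
  "continuous_on K GG" "\<And>x. x \<in> \<Omega> \<Longrightarrow> GG x = grad f x"
  using ext_closure[OF grad_uc GG_def] by blast+

lemma GG_uc: "uniformly_continuous_on K GG"
  using compact_uniformly_continuous[OF GG_props(2) K_compact] .

lemma FF_bnd: assumes "x \<in> K" shows "\<bar>FF x\<bar> \<le> Nf"
proof -
  have "norm (FF x) \<le> Nf"
    by (rule Lim_norm_ubound[OF closure_limpt_nontriv[OF op assms] FF_props(1)[OF assms]])
      (unfold eventually_at_filter, rule always_eventually, simp add: f_bnd)
  then show ?thesis by simp
qed

lemma GG_bnd: assumes "x \<in> K" shows "norm (GG x) \<le> real DIM('a) * Nf"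
  by (rule Lim_norm_ubound[OF closure_limpt_nontriv[OF op assms] GG_props(1)[OF assms]])
      (unfold eventually_at_filter, rule always_eventually, simp add: grad_bnd)

lemma J3:
  assumes e: "e > 0"
  shows "\<exists>\<eta>>0. \<forall>x\<in>K. \<forall>y\<in>K. dist x y < \<eta> \<longrightarrow> \<bar>FF y - FF x - GG x \<bullet> (y - x)\<bar> \<le> e * dist x y"
proof -
  obtain \<eta> where \<eta>: "\<eta> > 0" "\<And>x y. x \<in> \<Omega> \<Longrightarrow> y \<in> \<Omega> \<Longrightarrow> dist x y < \<eta> \<Longrightarrow> \<bar>f y - f x - grad f x \<bullet> (y - x)\<bar> \<le> e * dist x y"
    using J1[OF e] by blast
  have main: "\<bar>FF y - FF x - GG x \<bullet> (y - x)\<bar> \<le> e * dist x y" if xy: "x \<in> K" "y \<in> K" "dist x y < \<eta>" for x y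
  proof -
    obtain xs where xs: "\<And>n. xs n \<in> \<Omega>" "xs \<longlonglongrightarrow> x"
      using closure_sequential[THEN iffD1, OF xy(1)] by blast
    obtain ys where ys: "\<And>n. ys n \<in> \<Omega>" "ys \<longlonglongrightarrow> y"
      using closure_sequential[THEN iffD1, OF xy(2)] by blast
    have xsK: "\<forall>\<^sub>F n in sequentially. xs n \<in> K" and ysK: "\<forall>\<^sub>F n in sequentially. ys n \<in> K"
      using xs(1) ys(1) closure_subset[of \<Omega>] by (simp_all add: subset_eq)
    have Fx: "(\<lambda>n. FF (xs n)) \<longlonglongrightarrow> FF x" by (rule continuous_on_tendsto_compose[OF FF_props(2) xs(2) xy(1) xsK])
    have Fy: "(\<lambda>n. FF (ys n)) \<longlonglongrightarrow> FF y" by (rule continuous_on_tendsto_compose[OF FF_props(2) ys(2) xy(2) ysK])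
    have Gx: "(\<lambda>n. GG (xs n)) \<longlonglongrightarrow> GG x" by (rule continuous_on_tendsto_compose[OF GG_props(2) xs(2) xy(1) xsK])
    have lim: "(\<lambda>n. \<bar>FF (ys n) - FF (xs n) - GG (xs n) \<bullet> (ys n - xs n)\<bar> - e * dist (xs n) (ys n))
        \<longlonglongrightarrow> \<bar>FF y - FF x - GG x \<bullet> (y - x)\<bar> - e * dist x y"
      by (intro tendsto_diff tendsto_rabs tendsto_mult tendsto_const tendsto_inner tendsto_dist Fx Fy Gx xs(2) ys(2))
    have "\<forall>\<^sub>F n in sequentially. dist (xs n) (ys n) < \<eta>"
    proof -
      have "(\<lambda>n. dist (xs n) (ys n)) \<longlonglongrightarrow> dist x y" by (intro tendsto_intros xs(2) ys(2))
      then show ?thesis using xy(3) by (rule order_tendstoD)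
    qed
    then have ev: "\<forall>\<^sub>F n in sequentially. \<bar>FF (ys n) - FF (xs n) - GG (xs n) \<bullet> (ys n - xs n)\<bar> - e * dist (xs n) (ys n) \<le> 0"
    proof eventually_elim
      case (elim n)
      have eqs: "FF (xs n) = f (xs n)" "FF (ys n) = f (ys n)" "GG (xs n) = grad f (xs n)"
        using FF_props(3) GG_props(3) xs(1) ys(1) by blast+
      show ?case using \<eta>(2)[OF xs(1) ys(1) elim] unfolding eqs by linarith
    qed
    have "\<bar>FF y - FF x - GG x \<bullet> (y - x)\<bar> - e * dist x y \<le> 0"
      by (rule tendsto_upperbound[OF lim ev sequentially_bot])
    then show ?thesis by simp
  qed
  show ?thesis
  proof (rule exI[of _ \<eta>], intro conjI ballI impI)
    show "\<eta> > 0" by (rule \<eta>(1))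
  qed (rule main)
qed

end

context dom begin

definition "cP f k = (if fst k \<le> 0 then f (pt k) - grad f (pt k) \<bullet> pt k else 0)"
definition "gP f k = (if fst k \<le> 0 then grad f (pt k) else 0)"
definition "Ext f x = (if x \<in> \<Omega> then f x else if x \<in> K then Lim (at x within \<Omega>) f
                       else Eo (cP f) (gP f) x)"
definition "CB = 1 + 156 * (real DIM('a))^2"
definition "C4 = 24 * C0 + 24 * real DIM('a) + 2 * CB"
definition "CG = real DIM('a) + (32/9) * C4 * NC * 26"
definition "CE = max CB CG"

lemma CB_ge1: "CB \<ge> 1" by (simp add: CB_def)
lemma C4_pos: "C4 > 0" using C0_pos CB_ge1 dd_pos by (simp add: C4_def)
lemma CG_ge: "CG \<ge> real DIM('a)" using C4_pos by (simp add: CG_def)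
lemma CE_ge: "CE \<ge> CB" "CE \<ge> CG" "CE \<ge> 1" "CE \<ge> real DIM('a)"
  using CB_ge1 CG_ge by (auto simp: CE_def)

lemma Ak:
  assumes "y \<notin> K" "k \<in> A y"
  shows "pt k \<in> \<Omega>" "dist y (pt k) < 12 * \<delta> y"
    "2 * (real DIM('a) * hs (fst k)) < \<delta> y" "\<delta> y < 13 * (real DIM('a) * hs (fst k))"
    "k \<in> I"
proof -
  have kI: "k \<in> I" and nz: "\<psi> k y \<noteq> 0" using assms(2) by (auto simp: A_def)
  show "pt k \<in> \<Omega>" using pt_prop[OF kI] by blast
  show "dist y (pt k) < 12 * \<delta> y" "2 * (real DIM('a) * hs (fst k)) < \<delta> y"
    "\<delta> y < 13 * (real DIM('a) * hs (fst k))" using supp[OF kI nz] by auto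
  show "k \<in> I" by (rule kI)
qed

lemma small:
  assumes "y \<notin> K" "k \<in> A y" "\<delta> y \<le> 2"
  shows "fst k \<le> 0"
proof -
  have "2 * (real DIM('a) * hs (fst k)) < 2" using Ak(3)[OF assms(1,2)] assms(3) by linarith
  then have "real DIM('a) * hs (fst k) < 1" by simp
  moreover have "hs (fst k) \<le> real DIM('a) * hs (fst k)"
    using mult_right_mono[OF dd_ge1, of "hs (fst k)"] hs_pos[of "fst k"] by simp
  ultimately have "hs (fst k) \<le> 1" by linarith
  then show ?thesis by (simp add: hs_le_1)
qed

lemma big_delta:
  assumes "y \<notin> K" "k \<in> A y" "\<not> fst k \<le> 0"
  shows "\<delta> y > 2"
  using small[OF assms(1,2)] assms(3) by linarith

lemma Q_eq: "fst k \<le> 0 \<Longrightarrow> cP f k + gP f k \<bullet> y = f (pt k) + grad f (pt k) \<bullet> (y - pt k)"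
  by (simp add: cP_def gP_def inner_diff_right)

lemma Q_big: "\<not> fst k \<le> 0 \<Longrightarrow> cP f k + gP f k \<bullet> y = 0"
  by (simp add: cP_def gP_def)

end

context fdom begin

lemma gP_bnd: assumes "k \<in> I" shows "norm (gP f k) \<le> real DIM('a) * Nf"
  using grad_bnd[of "pt k"] pt_prop[OF assms] Nf_nonneg by (simp add: gP_def)

lemma Q_bnd:
  assumes y: "y \<notin> K" and k: "k \<in> A y"
  shows "\<bar>cP f k + gP f k \<bullet> y\<bar> \<le> CB * Nf"
proof (cases "fst k \<le> 0")
  case True
  note a = Ak[OF y k]
  have h1: "hs (fst k) \<le> 1" using True by (simp add: hs_le_1)
  have d13: "\<delta> y \<le> 13 * real DIM('a)"
  proof -
    have "real DIM('a) * hs (fst k) \<le> real DIM('a) * 1" using h1 dd_pos by (intro mult_left_mono) auto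
    then show ?thesis using a(4) by linarith
  qed
  have "\<bar>f (pt k) + grad f (pt k) \<bullet> (y - pt k)\<bar> \<le> \<bar>f (pt k)\<bar> + \<bar>grad f (pt k) \<bullet> (y - pt k)\<bar>" by linarith
  also have "\<bar>grad f (pt k) \<bullet> (y - pt k)\<bar> \<le> (real DIM('a) * Nf) * (12 * (13 * real DIM('a)))"
  proof -
    have "\<bar>grad f (pt k) \<bullet> (y - pt k)\<bar> \<le> norm (grad f (pt k)) * norm (y - pt k)" by (rule Cauchy_Schwarz_ineq2)
    also have "\<dots> \<le> (real DIM('a) * Nf) * (12 * (13 * real DIM('a)))"
    proof (rule mult_mono)
      show "norm (grad f (pt k)) \<le> real DIM('a) * Nf" by (rule grad_bnd[OF a(1)])
      show "norm (y - pt k) \<le> 12 * (13 * real DIM('a))" using a(2) d13 by (simp add: dist_norm)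
    qed (use Nf_nonneg in auto)
    finally show ?thesis .
  qed
  also have "\<bar>f (pt k)\<bar> \<le> Nf" by (rule f_bnd[OF a(1)])
  finally have "\<bar>f (pt k) + grad f (pt k) \<bullet> (y - pt k)\<bar> \<le> Nf + (real DIM('a) * Nf) * (12 * (13 * real DIM('a)))"
    by simp
  also have "\<dots> = CB * Nf" by (simp add: CB_def power2_eq_square algebra_simps)
  finally show ?thesis using Q_eq[OF True] by simp
next
  case False
  then show ?thesis using Q_big[OF False] Nf_nonneg CB_ge1 by simp
qed

lemma Q_pair:
  assumes y: "y \<notin> K" and k: "k \<in> A y" and l: "l \<in> A y"
  shows "\<bar>(cP f k + gP f k \<bullet> y) - (cP f l + gP f l \<bullet> y)\<bar> \<le> C4 * Nf * \<delta> y"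
proof (cases "fst k \<le> 0 \<and> fst l \<le> 0")
  case True
  note a = Ak[OF y k] and b = Ak[OF y l]
  let ?p = "pt k" and ?q = "pt l"
  have eq: "(cP f k + gP f k \<bullet> y) - (cP f l + gP f l \<bullet> y)
     = (f ?p - f ?q - grad f ?q \<bullet> (?p - ?q)) + (grad f ?p - grad f ?q) \<bullet> (y - ?p)"
    using True by (simp add: Q_eq inner_diff_left inner_diff_right algebra_simps)
  have dpq: "dist ?q ?p \<le> 24 * \<delta> y"
    using dist_triangle[of ?q ?p y] a(2) b(2) by (simp add: dist_commute)
  have t1: "\<bar>f ?p - f ?q - grad f ?q \<bullet> (?p - ?q)\<bar> \<le> C0 * Nf * (24 * \<delta> y)"
  proof -
    have "\<bar>f ?p - f ?q - grad f ?q \<bullet> (?p - ?q)\<bar> \<le> C0 * Nf * dist ?q ?p" by (rule J2[OF b(1) a(1)])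
    also have "\<dots> \<le> C0 * Nf * (24 * \<delta> y)"
      using dpq C0_pos Nf_nonneg by (intro mult_left_mono) auto
    finally show ?thesis .
  qed
  have t2: "\<bar>(grad f ?p - grad f ?q) \<bullet> (y - ?p)\<bar> \<le> (2 * real DIM('a) * Nf) * (12 * \<delta> y)"
  proof -
    have "\<bar>(grad f ?p - grad f ?q) \<bullet> (y - ?p)\<bar> \<le> norm (grad f ?p - grad f ?q) * norm (y - ?p)"
      by (rule Cauchy_Schwarz_ineq2)
    also have "\<dots> \<le> (2 * real DIM('a) * Nf) * (12 * \<delta> y)"
    proof (rule mult_mono)
      have "norm (grad f ?p - grad f ?q) \<le> norm (grad f ?p) + norm (grad f ?q)" by (rule norm_triangle_ineq4)
      then show "norm (grad f ?p - grad f ?q) \<le> 2 * real DIM('a) * Nf"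
        using grad_bnd[OF a(1)] grad_bnd[OF b(1)] by simp
      show "norm (y - ?p) \<le> 12 * \<delta> y" using a(2) by (simp add: dist_norm)
    qed (use Nf_nonneg in auto)
    finally show ?thesis .
  qed
  have "\<bar>(cP f k + gP f k \<bullet> y) - (cP f l + gP f l \<bullet> y)\<bar> \<le> C0 * Nf * (24 * \<delta> y) + (2 * real DIM('a) * Nf) * (12 * \<delta> y)"
    unfolding eq using t1 t2 by linarith
  also have "\<dots> \<le> C4 * Nf * \<delta> y"
  proof -
    have "C0 * Nf * (24 * \<delta> y) + (2 * real DIM('a) * Nf) * (12 * \<delta> y) = (24 * C0 + 24 * real DIM('a)) * (Nf * \<delta> y)"
      by (simp add: algebra_simps)
    also have "\<dots> \<le> C4 * (Nf * \<delta> y)"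
      using CB_ge1 Nf_nonneg \<delta>_nonneg[of y] by (intro mult_right_mono) (auto simp: C4_def)
    finally show ?thesis by (simp add: mult.assoc)
  qed
  finally show ?thesis .
next
  case False
  then have d2: "\<delta> y > 2" using big_delta[OF y k] big_delta[OF y l] by blast
  have "\<bar>(cP f k + gP f k \<bullet> y) - (cP f l + gP f l \<bullet> y)\<bar> \<le> CB * Nf + CB * Nf"
    using Q_bnd[OF y k] Q_bnd[OF y l] by linarith
  also have "\<dots> = (2 * CB) * Nf * 1" by simp
  also have "\<dots> \<le> C4 * Nf * \<delta> y"
  proof (rule mult_mono)
    show "2 * CB * Nf \<le> C4 * Nf" using C0_pos dd_pos Nf_nonneg by (intro mult_right_mono) (auto simp: C4_def)
  qed (use d2 C4_pos Nf_nonneg in auto)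
  finally show ?thesis .
qed

lemma Eo_bnd: assumes y: "y \<notin> K" shows "\<bar>Eo (cP f) (gP f) y\<bar> \<le> CB * Nf"
  using Eo_bound[OF y, of "cP f" "gP f" 0 "CB * Nf"] Q_bnd[OF y] by simp

lemma gEo_bnd: assumes y: "y \<notin> K" shows "norm (gEo (cP f) (gP f) y) \<le> CG * Nf"
proof -
  obtain k0 where k0: "k0 \<in> A y" using A_ne[OF y] by blast
  have "norm (gEo (cP f) (gP f) y - 0) \<le> real DIM('a) * Nf + (32/9) * (C4 * Nf * \<delta> y) * NC * 26 / \<delta> y"
  proof (rule gEo_bound[OF y])
    show "norm (gP f k - 0) \<le> real DIM('a) * Nf" if "k \<in> A y" for k
      using gP_bnd Ak(5)[OF y that] by simp
    show "\<bar>cP f k + gP f k \<bullet> y - (cP f k0 + gP f k0 \<bullet> y)\<bar> \<le> C4 * Nf * \<delta> y" if "k \<in> A y" for k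
      by (rule Q_pair[OF y that k0])
  qed
  also have "\<dots> = CG * Nf" using \<delta>_pos[OF y] by (simp add: CG_def field_simps)
  finally show ?thesis by simp
qed

end

context fdom begin

lemma K_closed: "closed K" by simp

lemma near:
  assumes e: "e > 0"
  shows "\<exists>\<eta>>0. \<forall>y x1. y \<notin> K \<longrightarrow> x1 \<in> K \<longrightarrow> dist y x1 < \<eta> \<longrightarrow>
     (\<forall>k\<in>A y. \<bar>cP f k + gP f k \<bullet> y - (FF x1 + GG x1 \<bullet> (y - x1))\<bar> \<le> e * dist y x1 \<and>
               norm (gP f k - GG x1) \<le> e)"
proof -
  define e' where "e' = e / 25"
  have e': "e' > 0" using e by (simp add: e'_def)
  obtain \<eta>1 where \<eta>1: "\<eta>1 > 0" "\<And>x y. x \<in> K \<Longrightarrow> y \<in> K \<Longrightarrow> dist x y < \<eta>1 \<Longrightarrow>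
      \<bar>FF y - FF x - GG x \<bullet> (y - x)\<bar> \<le> e' * dist x y"
    using J3[OF e'] by blast
  obtain \<eta>2 where \<eta>2: "\<eta>2 > 0" "\<And>x x'. x \<in> K \<Longrightarrow> x' \<in> K \<Longrightarrow> dist x' x < \<eta>2 \<Longrightarrow> dist (GG x') (GG x) < e'"
    using GG_uc e' unfolding uniformly_continuous_on_def by metis
  define \<eta> where "\<eta> = min 1 (min (\<eta>1 / 13) (\<eta>2 / 13))"
  have \<eta>: "\<eta> > 0" using \<eta>1 \<eta>2 by (simp add: \<eta>_def)
  have main: "\<bar>cP f k + gP f k \<bullet> y - (FF x1 + GG x1 \<bullet> (y - x1))\<bar> \<le> e * dist y x1 \<and>
               norm (gP f k - GG x1) \<le> e"
    if y: "y \<notin> K" and x1: "x1 \<in> K" and d: "dist y x1 < \<eta>" and k: "k \<in> A y" for y x1 k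
  proof -
    note a = Ak[OF y k]
    let ?p = "pt k"
    have dy: "\<delta> y \<le> dist y x1" by (rule \<delta>_le[OF x1])
    have sm: "fst k \<le> 0" using small[OF y k] dy d by (simp add: \<eta>_def)
    have pK: "?p \<in> K" using a(1) closure_subset by blast
    have dyp: "dist y ?p \<le> 12 * dist y x1" using a(2) dy by linarith
    have dxp: "dist x1 ?p \<le> 13 * dist y x1"
      using dist_triangle[of x1 ?p y] dyp by (simp add: dist_commute)
    have dxp1: "dist x1 ?p < \<eta>1" and dxp2: "dist ?p x1 < \<eta>2"
      using dxp d by (auto simp: \<eta>_def dist_commute)
    have t1: "\<bar>f ?p - FF x1 - GG x1 \<bullet> (?p - x1)\<bar> \<le> e' * (13 * dist y x1)"
    proof -
      have "\<bar>FF ?p - FF x1 - GG x1 \<bullet> (?p - x1)\<bar> \<le> e' * dist x1 ?p" by (rule \<eta>1(2)[OF x1 pK dxp1])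
      also have "\<dots> \<le> e' * (13 * dist y x1)" using dxp e' by (intro mult_left_mono) auto
      finally show ?thesis using FF_props(3)[OF a(1)] by simp
    qed
    have g: "norm (grad f ?p - GG x1) < e'"
      using \<eta>2(2)[OF x1 pK dxp2] GG_props(3)[OF a(1)] by (simp add: dist_norm)
    have t2: "\<bar>(grad f ?p - GG x1) \<bullet> (y - ?p)\<bar> \<le> e' * (12 * dist y x1)"
    proof -
      have "\<bar>(grad f ?p - GG x1) \<bullet> (y - ?p)\<bar> \<le> norm (grad f ?p - GG x1) * norm (y - ?p)"
        by (rule Cauchy_Schwarz_ineq2)
      also have "\<dots> \<le> e' * (12 * dist y x1)"
        using g dyp e' by (intro mult_mono) (auto simp: dist_norm)
      finally show ?thesis .
    qed
    have eq: "cP f k + gP f k \<bullet> y - (FF x1 + GG x1 \<bullet> (y - x1))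
        = (f ?p - FF x1 - GG x1 \<bullet> (?p - x1)) + (grad f ?p - GG x1) \<bullet> (y - ?p)"
      using sm by (simp add: Q_eq inner_diff_left inner_diff_right algebra_simps)
    have "\<bar>cP f k + gP f k \<bullet> y - (FF x1 + GG x1 \<bullet> (y - x1))\<bar> \<le> e' * (13 * dist y x1) + e' * (12 * dist y x1)"
      unfolding eq using t1 t2 by linarith
    also have "\<dots> = e * dist y x1" by (simp add: e'_def algebra_simps)
    finally have 1: "\<bar>cP f k + gP f k \<bullet> y - (FF x1 + GG x1 \<bullet> (y - x1))\<bar> \<le> e * dist y x1" .
    have "norm (gP f k - GG x1) \<le> e" using g sm e by (simp add: gP_def e'_def)
    with 1 show ?thesis by blast
  qed
  show ?thesis by (rule exI[of _ \<eta>]) (use \<eta> main in blast)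
qed

definition "gradE x = (if x \<in> K then GG x else gEo (cP f) (gP f) x)"

lemma Ext_K: "x \<in> K \<Longrightarrow> Ext f x = FF x" by (simp add: Ext_def FF_def)
lemma Ext_U: "x \<notin> K \<Longrightarrow> Ext f x = Eo (cP f) (gP f) x"
  using closure_subset[of \<Omega>] by (auto simp: Ext_def)
lemma Ext_\<Omega>: "x \<in> \<Omega> \<Longrightarrow> Ext f x = f x" by (simp add: Ext_def)

lemma Ext_deriv_K:
  assumes x: "x \<in> K"
  shows "(Ext f has_derivative (\<lambda>w. GG x \<bullet> w)) (at x)"
  unfolding has_derivative_at_alt
proof (intro conjI allI impI)
  show "bounded_linear (\<lambda>w. GG x \<bullet> w)" by (rule bounded_linear_inner_right)
  fix e :: real assume e: "e > 0"
  obtain \<eta>1 where \<eta>1: "\<eta>1 > 0" "\<And>x y. x \<in> K \<Longrightarrow> y \<in> K \<Longrightarrow> dist x y < \<eta>1 \<Longrightarrow>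
      \<bar>FF y - FF x - GG x \<bullet> (y - x)\<bar> \<le> e * dist x y"
    using J3[OF e] by blast
  obtain \<eta>2 where \<eta>2: "\<eta>2 > 0" "\<And>y x1 k. y \<notin> K \<Longrightarrow> x1 \<in> K \<Longrightarrow> dist y x1 < \<eta>2 \<Longrightarrow> k \<in> A y \<Longrightarrow>
      \<bar>cP f k + gP f k \<bullet> y - (FF x1 + GG x1 \<bullet> (y - x1))\<bar> \<le> e * dist y x1"
    using near[OF e] by blast
  have "norm (Ext f y - Ext f x - GG x \<bullet> (y - x)) \<le> e * norm (y - x)"
    if y: "norm (y - x) < min \<eta>1 \<eta>2" for y
  proof (cases "y \<in> K")
    case True
    have "\<bar>FF y - FF x - GG x \<bullet> (y - x)\<bar> \<le> e * dist x y"
      by (rule \<eta>1(2)[OF x True]) (use y in \<open>simp add: dist_norm norm_minus_commute\<close>)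
    then show ?thesis using Ext_K[OF x] Ext_K[OF True] by (simp add: dist_norm norm_minus_commute)
  next
    case False
    have "\<bar>Eo (cP f) (gP f) y - (FF x + GG x \<bullet> (y - x))\<bar> \<le> e * dist y x"
      by (rule Eo_bound[OF False]) (rule \<eta>2(2)[OF False x], use y in \<open>simp_all add: dist_norm\<close>)
    then show ?thesis using Ext_K[OF x] Ext_U[OF False] by (simp add: dist_norm algebra_simps)
  qed
  then show "\<exists>d>0. \<forall>y. norm (y - x) < d \<longrightarrow> norm (Ext f y - Ext f x - GG x \<bullet> (y - x)) \<le> e * norm (y - x)"
    using \<eta>1(1) \<eta>2(1) by (intro exI[of _ "min \<eta>1 \<eta>2"]) auto
qed

lemma Ext_deriv_U:
  assumes x: "x \<notin> K"
  shows "(Ext f has_derivative (\<lambda>w. gEo (cP f) (gP f) x \<bullet> w)) (at x)"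
proof -
  have "(Eo (cP f) (gP f) has_derivative (\<lambda>w. gEo (cP f) (gP f) x \<bullet> w)) (at x)" by (rule Eo_deriv[OF x])
  then show ?thesis
    by (rule has_derivative_transform_within_open[where s="- K"]) (use x Ext_U in auto)
qed

lemma Ext_deriv: "(Ext f has_derivative (\<lambda>w. gradE x \<bullet> w)) (at x)"
  using Ext_deriv_K Ext_deriv_U by (cases "x \<in> K") (auto simp: gradE_def)

lemma gradE_cont: "isCont gradE x"
proof (cases "x \<in> K")
  case False
  have "isCont (gEo (cP f) (gP f)) x" by (rule gEo_cont[OF False])
  moreover have "eventually (\<lambda>y. gradE y = gEo (cP f) (gP f) y) (nhds x)"
  proof -
    have "eventually (\<lambda>y. y \<in> - K) (nhds x)" using False by (intro eventually_nhds_in_open) auto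
    then show ?thesis by eventually_elim (simp add: gradE_def)
  qed
  ultimately show ?thesis using isCont_cong by blast
next
  case True
  note x = True
  define Kc where "Kc = 1 + (32/9) * 26 * real NC"
  have Kc: "Kc \<ge> 1" by (simp add: Kc_def)
  show ?thesis unfolding continuous_at_eps_delta
  proof (intro allI impI)
    fix e :: real assume e: "e > 0"
    define e' where "e' = e / (2 * Kc)"
    have e': "e' > 0" using e Kc by (simp add: e'_def)
    obtain \<eta> where \<eta>: "\<eta> > 0" "\<And>y x1 k. y \<notin> K \<Longrightarrow> x1 \<in> K \<Longrightarrow> dist y x1 < \<eta> \<Longrightarrow> k \<in> A y \<Longrightarrow>
      \<bar>cP f k + gP f k \<bullet> y - (FF x1 + GG x1 \<bullet> (y - x1))\<bar> \<le> e' * dist y x1 \<and> norm (gP f k - GG x1) \<le> e'"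
      using near[OF e'] by blast
    have e2: "e / 2 > 0" using e by simp
    obtain d1 where d1: "d1 > 0" "\<And>x x'. x \<in> K \<Longrightarrow> x' \<in> K \<Longrightarrow> dist x' x < d1 \<Longrightarrow> dist (GG x') (GG x) < e / 2"
      using GG_uc e2 unfolding uniformly_continuous_on_def by metis
    have "dist (gradE y) (gradE x) < e" if y: "dist y x < min \<eta> (d1 / 2)" for y
    proof (cases "y \<in> K")
      case True
      have "dist y x < d1 / 2" using y by simp
      then have "dist y x < d1" using zero_le_dist[of y x] by linarith
      then have "dist (GG y) (GG x) < e / 2" by (rule d1(2)[OF x True])
      then have "dist (GG y) (GG x) < e" using zero_le_dist[of "GG y" "GG x"] by linarith
      then show ?thesis using x True by (simp add: gradE_def)
    next
      case False
      obtain x1 where x1: "x1 \<in> K" "\<delta> y = dist y x1" using \<delta>_attained by blast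
      have dyx1: "dist y x1 \<le> dist y x" using \<delta>_le[OF x, of y] x1(2) by simp
      have dpos: "\<delta> y > 0" using \<delta>_pos[OF False] .
      have "norm (gEo (cP f) (gP f) y - GG x1) \<le> e' + (32/9) * (e' * dist y x1) * NC * 26 / \<delta> y"
      proof (rule gEo_bound[OF False])
        show "norm (gP f k - GG x1) \<le> e'" if "k \<in> A y" for k
          using \<eta>(2)[OF False x1(1) _ that] dyx1 y by auto
        show "\<bar>cP f k + gP f k \<bullet> y - (FF x1 + GG x1 \<bullet> (y - x1))\<bar> \<le> e' * dist y x1" if "k \<in> A y" for k
          using \<eta>(2)[OF False x1(1) _ that] dyx1 y by auto
      qed
      also have "\<dots> = e' * Kc" using dpos x1(2) by (simp add: Kc_def field_simps)
      also have "\<dots> = e / 2" using Kc by (simp add: e'_def)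
      finally have 1: "dist (gEo (cP f) (gP f) y) (GG x1) \<le> e / 2" by (simp add: dist_norm)
      have "dist x1 x \<le> dist x1 y + dist y x" by (rule dist_triangle)
      also have "\<dots> < d1" using dyx1 y by (simp add: dist_commute)
      finally have 2: "dist (GG x1) (GG x) < e / 2" by (rule d1(2)[OF x x1(1)])
      have "dist (gEo (cP f) (gP f) y) (GG x) < e"
        using dist_triangle[of "gEo (cP f) (gP f) y" "GG x" "GG x1"] 1 2 by linarith
      then show ?thesis using x False by (simp add: gradE_def)
    qed
    then show "\<exists>d>0. \<forall>y. dist y x < d \<longrightarrow> dist (gradE y) (gradE x) < e"
      using \<eta>(1) d1(1) by (intro exI[of _ "min \<eta> (d1 / 2)"]) auto
  qed
qed

lemma Ext_bnd: "\<bar>Ext f x\<bar> \<le> CE * Nf"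
proof (cases "x \<in> K")
  case True
  have "\<bar>FF x\<bar> \<le> Nf" by (rule FF_bnd[OF True])
  also have "\<dots> \<le> CE * Nf" using CE_ge(3) Nf_nonneg by (simp add: mult_le_cancel_right1)
  finally show ?thesis using Ext_K[OF True] by simp
next
  case False
  have "\<bar>Eo (cP f) (gP f) x\<bar> \<le> CB * Nf" by (rule Eo_bnd[OF False])
  also have "\<dots> \<le> CE * Nf" using CE_ge(1) Nf_nonneg by (intro mult_right_mono) auto
  finally show ?thesis using Ext_U[OF False] by simp
qed

lemma gradE_bnd: "norm (gradE x) \<le> CE * Nf"
proof (cases "x \<in> K")
  case True
  have "norm (GG x) \<le> real DIM('a) * Nf" by (rule GG_bnd[OF True])
  also have "\<dots> \<le> CE * Nf" using CE_ge(4) Nf_nonneg by (intro mult_right_mono) auto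
  finally show ?thesis using True by (simp add: gradE_def)
next
  case False
  have "norm (gEo (cP f) (gP f) x) \<le> CG * Nf" by (rule gEo_bnd[OF False])
  also have "\<dots> \<le> CE * Nf" using CE_ge(2) Nf_nonneg by (intro mult_right_mono) auto
  finally show ?thesis using False by (simp add: gradE_def)
qed

end

lemma grad_of_deriv:
  assumes "(h has_derivative (\<lambda>w. v \<bullet> w)) (at p)"
  shows "grad h p = v"
proof -
  have "grad h p = (\<Sum>i\<in>Basis. (v \<bullet> i) *\<^sub>R i)"
    unfolding grad_def using partial_deriv_eq[OF assms] by simp
  also have "\<dots> = v" by (rule euclidean_representation)
  finally show ?thesis .
qed

lemma grad_local:
  assumes "f differentiable (at p)" "open S" "p \<in> S" "\<And>x. x \<in> S \<Longrightarrow> f x = g x"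
  shows "grad g p = grad f p"
proof -
  have "(g has_derivative (\<lambda>w. grad f p \<bullet> w)) (at p)"
    by (rule has_derivative_transform_within_open[OF grad_deriv[OF assms(1)] assms(2,3,4)])
  then show ?thesis by (rule grad_of_deriv)
qed

lemma grad_add:
  assumes "f differentiable (at p)" "g differentiable (at p)"
  shows "grad (\<lambda>x. f x + g x) p = grad f p + grad g p"
proof -
  have "((\<lambda>x. f x + g x) has_derivative (\<lambda>w. grad f p \<bullet> w + grad g p \<bullet> w)) (at p)"
    by (rule has_derivative_add[OF grad_deriv[OF assms(1)] grad_deriv[OF assms(2)]])
  then have "((\<lambda>x. f x + g x) has_derivative (\<lambda>w. (grad f p + grad g p) \<bullet> w)) (at p)"
    by (simp add: inner_add_left)
  then show ?thesis by (rule grad_of_deriv)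
qed

lemma grad_cmul:
  assumes "f differentiable (at p)"
  shows "grad (\<lambda>x. c * f x) p = c *\<^sub>R grad f p"
proof -
  have "((\<lambda>x. c * f x) has_derivative (\<lambda>w. c * (grad f p \<bullet> w))) (at p)"
    by (rule has_derivative_mult_right[OF grad_deriv[OF assms(1)]])
  then have "((\<lambda>x. c * f x) has_derivative (\<lambda>w. (c *\<^sub>R grad f p) \<bullet> w)) (at p)"
    by simp
  then show ?thesis by (rule grad_of_deriv)
qed

context pu begin

lemma Eo_cong:
  assumes "\<And>k. k \<in> A y \<Longrightarrow> c1 k = c2 k" "\<And>k. k \<in> A y \<Longrightarrow> g1 k = g2 k"
  shows "Eo c1 g1 y = Eo c2 g2 y"
  unfolding Eo_def using assms by (intro arg_cong2[where f="(/)"] sum.cong refl) auto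

lemma Eo_add: "Eo (\<lambda>k. c1 k + c2 k) (\<lambda>k. g1 k + g2 k) y = Eo c1 g1 y + Eo c2 g2 y"
  by (simp add: Eo_def inner_add_left algebra_simps sum.distrib add_divide_distrib)

lemma Eo_cmul: "Eo (\<lambda>k. a * c1 k) (\<lambda>k. a *\<^sub>R g1 k) y = a * Eo c1 g1 y"
  by (simp add: Eo_def algebra_simps sum_distrib_left)

end

context dom begin

lemma Ext_local:
  assumes f: "C1_closure \<Omega> f" and g: "C1_closure \<Omega> g" and eq: "\<forall>x\<in>\<Omega>. f x = g x"
  shows "Ext f = Ext g"
proof
  fix x
  have fd: "\<And>z. z \<in> \<Omega> \<Longrightarrow> f differentiable (at z)" using f by (simp add: C1_closure_def)
  show "Ext f x = Ext g x"
  proof (cases "x \<in> \<Omega>")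
    case True then show ?thesis using eq by (simp add: Ext_def)
  next
    case xO: False
    show ?thesis
    proof (cases "x \<in> K")
      case True
      have ev: "\<forall>\<^sub>F y in at x within \<Omega>. f y = g y"
        unfolding eventually_at_filter by (rule always_eventually) (simp add: eq)
      have "Lim (at x within \<Omega>) f = Lim (at x within \<Omega>) g" by (rule Lim_cong[OF ev refl])
      then show ?thesis using xO True by (simp add: Ext_def)
    next
      case False
      have "Eo (cP f) (gP f) x = Eo (cP g) (gP g) x"
      proof (rule Eo_cong)
        fix k assume k: "k \<in> A x"
        have p: "pt k \<in> \<Omega>" using Ak(1)[OF False k] .
        have gr: "grad g (pt k) = grad f (pt k)"
          by (rule grad_local[OF fd[OF p] op p]) (simp add: eq)
        show "cP f k = cP g k" "gP f k = gP g k" using gr eq p by (simp_all add: cP_def gP_def)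
      qed
      then show ?thesis using xO False by (simp add: Ext_def)
    qed
  qed
qed

lemma Ext_add:
  assumes f: "C1_closure \<Omega> f" and g: "C1_closure \<Omega> g"
  shows "Ext (\<lambda>x. f x + g x) = (\<lambda>x. Ext f x + Ext g x)"
proof
  fix x
  interpret F: fdom \<Omega> f by unfold_locales (rule f)
  interpret G: fdom \<Omega> g by unfold_locales (rule g)
  show "Ext (\<lambda>x. f x + g x) x = Ext f x + Ext g x"
  proof (cases "x \<in> \<Omega>")
    case True then show ?thesis by (simp add: Ext_def)
  next
    case xO: False
    show ?thesis
    proof (cases "x \<in> K")
      case True
      have "((\<lambda>y. f y + g y) \<longlongrightarrow> F.FF x + G.FF x) (at x within \<Omega>)"
        by (intro tendsto_add F.FF_props(1)[OF True] G.FF_props(1)[OF True])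
      then have "Lim (at x within \<Omega>) (\<lambda>y. f y + g y) = F.FF x + G.FF x"
        by (rule tendsto_Lim[OF closure_limpt_nontriv[OF op True]])
      then show ?thesis using xO True F.Ext_K[OF True] G.Ext_K[OF True] by (simp add: Ext_def)
    next
      case False
      have "Eo (cP (\<lambda>x. f x + g x)) (gP (\<lambda>x. f x + g x)) x
          = Eo (\<lambda>k. cP f k + cP g k) (\<lambda>k. gP f k + gP g k) x"
      proof (rule Eo_cong)
        fix k assume k: "k \<in> A x"
        have p: "pt k \<in> \<Omega>" using Ak(1)[OF False k] .
        have gr: "grad (\<lambda>x. f x + g x) (pt k) = grad f (pt k) + grad g (pt k)"
          by (rule grad_add[OF F.f_diff[OF p] G.f_diff[OF p]])
        show "cP (\<lambda>x. f x + g x) k = cP f k + cP g k" "gP (\<lambda>x. f x + g x) k = gP f k + gP g k"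
          using gr by (simp_all add: cP_def gP_def inner_add_left)
      qed
      also have "\<dots> = Eo (cP f) (gP f) x + Eo (cP g) (gP g) x" by (rule Eo_add)
      finally show ?thesis using xO False by (simp add: Ext_def)
    qed
  qed
qed

lemma Ext_cmul:
  assumes f: "C1_closure \<Omega> f"
  shows "Ext (\<lambda>x. c * f x) = (\<lambda>x. c * Ext f x)"
proof
  fix x
  interpret F: fdom \<Omega> f by unfold_locales (rule f)
  show "Ext (\<lambda>x. c * f x) x = c * Ext f x"
  proof (cases "x \<in> \<Omega>")
    case True then show ?thesis by (simp add: Ext_def)
  next
    case xO: False
    show ?thesis
    proof (cases "x \<in> K")
      case True
      have "((\<lambda>y. c * f y) \<longlongrightarrow> c * F.FF x) (at x within \<Omega>)"
        by (intro tendsto_mult tendsto_const F.FF_props(1)[OF True])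
      then have "Lim (at x within \<Omega>) (\<lambda>y. c * f y) = c * F.FF x"
        by (rule tendsto_Lim[OF closure_limpt_nontriv[OF op True]])
      then show ?thesis using xO True F.Ext_K[OF True] by (simp add: Ext_def)
    next
      case False
      have "Eo (cP (\<lambda>x. c * f x)) (gP (\<lambda>x. c * f x)) x
          = Eo (\<lambda>k. c * cP f k) (\<lambda>k. c *\<^sub>R gP f k) x"
      proof (rule Eo_cong)
        fix k assume k: "k \<in> A x"
        have p: "pt k \<in> \<Omega>" using Ak(1)[OF False k] .
        have gr: "grad (\<lambda>x. c * f x) (pt k) = c *\<^sub>R grad f (pt k)"
          by (rule grad_cmul[OF F.f_diff[OF p]])
        show "cP (\<lambda>x. c * f x) k = c * cP f k" "gP (\<lambda>x. c * f x) k = c *\<^sub>R gP f k"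
          using gr by (simp_all add: cP_def gP_def algebra_simps)
      qed
      also have "\<dots> = c * Eo (cP f) (gP f) x" by (rule Eo_cmul)
      finally show ?thesis using xO False by (simp add: Ext_def)
    qed
  qed
qed

end

context fdom begin

lemma pd_Ext: "partial_deriv (Ext f) i = (\<lambda>x. gradE x \<bullet> i)"
  by (rule ext) (rule partial_deriv_eq[OF Ext_deriv])

lemma Ext_C1b: "C1_bounded (Ext f)"
  unfolding C1_bounded_def
proof (intro conjI ballI allI)
  show "Ext f differentiable (at x)" for x using Ext_deriv by (auto simp: differentiable_def)
  show "continuous_on UNIV (partial_deriv (Ext f) i)" for i
    unfolding pd_Ext
    by (rule continuous_at_imp_continuous_on) (auto intro!: continuous_intros gradE_cont)
  show "bounded (range (Ext f))" unfolding bounded_iff using Ext_bnd by auto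
  show "bounded (range (partial_deriv (Ext f) i))" if "i \<in> Basis" for i
  proof -
    have "\<bar>gradE x \<bullet> i\<bar> \<le> CE * Nf" for x
      using Basis_le_norm[OF that, of "gradE x"] gradE_bnd[of x] by simp
    then show ?thesis unfolding pd_Ext bounded_iff by auto
  qed
qed

lemma Ext_norm: "C1_norm UNIV (Ext f) \<le> CE * C1_norm \<Omega> f"
proof -
  have "C1_norm UNIV (Ext f) \<le> CE * Nf"
    unfolding C1_norm_def
  proof (rule cSup_least)
    show "{0} \<union> {\<bar>Ext f x\<bar> |x. x \<in> UNIV} \<union> {\<bar>partial_deriv (Ext f) i x\<bar> |x i. x \<in> UNIV \<and> i \<in> Basis} \<noteq> {}"
      by simp
    fix z assume z: "z \<in> {0} \<union> {\<bar>Ext f x\<bar> |x. x \<in> UNIV} \<union> {\<bar>partial_deriv (Ext f) i x\<bar> |x i. x \<in> UNIV \<and> i \<in> Basis}"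
    have c0: "0 \<le> CE * Nf" using CE_ge(3) Nf_nonneg by simp
    have c1: "\<bar>partial_deriv (Ext f) i x\<bar> \<le> CE * Nf" if "i \<in> Basis" for i x
      using Basis_le_norm[OF that, of "gradE x"] gradE_bnd[of x] by (simp add: pd_Ext)
    show "z \<le> CE * Nf" using z c0 c1 Ext_bnd by auto
  qed
  then show ?thesis by (simp add: Nf_def)
qed

end

theorem theorem2p7:
  fixes \<Omega> :: "'a::euclidean_space set"
  assumes "open \<Omega>" and "bounded \<Omega>" and "unif_loc_quasiconvex \<Omega>"
  shows "\<exists>E :: ('a \<Rightarrow> real) \<Rightarrow> ('a \<Rightarrow> real).
           (\<forall>f. C1_closure \<Omega> f \<longrightarrow> C1_bounded (E f)) \<and>
           (\<forall>f g. C1_closure \<Omega> f \<longrightarrow> C1_closure \<Omega> g \<longrightarrow>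
                  (\<forall>x\<in>\<Omega>. f x = g x) \<longrightarrow> E f = E g) \<and>
           (\<forall>f g. C1_closure \<Omega> f \<longrightarrow> C1_closure \<Omega> g \<longrightarrow>
                  E (\<lambda>x. f x + g x) = (\<lambda>x. E f x + E g x)) \<and>
           (\<forall>f c. C1_closure \<Omega> f \<longrightarrow> E (\<lambda>x. c * f x) = (\<lambda>x. c * E f x)) \<and>
           (\<exists>C. \<forall>f. C1_closure \<Omega> f \<longrightarrow> C1_norm UNIV (E f) \<le> C * C1_norm \<Omega> f) \<and>
           (\<forall>f. C1_closure \<Omega> f \<longrightarrow>
                  (\<forall>x\<in>closure \<Omega>. ((f \<longlongrightarrow> E f x) (at x within \<Omega>))) \<and>
                  (\<forall>x\<in>\<Omega>. E f x = f x))"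
proof (cases "\<Omega> = {}")
  case True
  have d0: "((\<lambda>x::'a. 0::real) has_derivative (\<lambda>w. (0::'a) \<bullet> w)) (at x)" for x
    by (auto intro: derivative_eq_intros)
  have pd0: "partial_deriv (\<lambda>x::'a. 0::real) i = (\<lambda>x. 0)" for i
    by (rule ext) (simp add: partial_deriv_eq[OF d0])
  have C1b: "C1_bounded (\<lambda>x::'a. 0::real)"
    unfolding C1_bounded_def pd0 by auto
  have nrm: "C1_norm UNIV (\<lambda>x::'a. 0::real) \<le> 0"
    unfolding C1_norm_def pd0 by (rule cSup_least) auto
  show ?thesis
    by (rule exI[of _ "\<lambda>f x. 0"]) (use C1b nrm True in \<open>auto intro!: exI[of _ 0]\<close>)
next
  case False
  interpret D: dom \<Omega> using assms False by unfold_locales auto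
  show ?thesis
  proof (intro exI[of _ D.Ext] conjI allI impI)
    fix f assume f: "C1_closure \<Omega> f"
    interpret F: fdom \<Omega> f by unfold_locales (rule f)
    show "C1_bounded (D.Ext f)" by (rule F.Ext_C1b)
    show "\<forall>x\<in>closure \<Omega>. (f \<longlongrightarrow> D.Ext f x) (at x within \<Omega>)"
      using F.Ext_K F.FF_props(1) by simp
    show "\<forall>x\<in>\<Omega>. D.Ext f x = f x" using F.Ext_\<Omega> by simp
  next
    fix f g assume "C1_closure \<Omega> f" "C1_closure \<Omega> g" "\<forall>x\<in>\<Omega>. f x = g x"
    then show "D.Ext f = D.Ext g" by (rule D.Ext_local)
  next
    fix f g assume "C1_closure \<Omega> f" "C1_closure \<Omega> g"
    then show "D.Ext (\<lambda>x. f x + g x) = (\<lambda>x. D.Ext f x + D.Ext g x)" by (rule D.Ext_add)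
  next
    fix f c assume "C1_closure \<Omega> f"
    then show "D.Ext (\<lambda>x. c * f x) = (\<lambda>x. c * D.Ext f x)" by (rule D.Ext_cmul)
  next
    show "\<exists>C. \<forall>f. C1_closure \<Omega> f \<longrightarrow> C1_norm UNIV (D.Ext f) \<le> C * C1_norm \<Omega> f"
    proof (intro exI[of _ D.CE] allI impI)
      fix f assume f: "C1_closure \<Omega> f"
      interpret F: fdom \<Omega> f by unfold_locales (rule f)
      show "C1_norm UNIV (D.Ext f) \<le> D.CE * C1_norm \<Omega> f" by (rule F.Ext_norm)
    qed
  qed
qed

end
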